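(* Let $d\in\mathbb N$ and $\alpha\in[0,d)$. Let $\mathbf U_1,\mathbf U_2,\dots$ be independent uniform random vectors on $(0,1)^d$ and $\mathcal U_n=(\mathbf U_1,\dots,\mathbf U_n)$. Then as $n\to\infty$, $$ n^{(\alpha-d)/d}\mathcal O^{d,\alpha}(\mathcal U_n)\xrightarrow{L^1}\frac{d}{d-\alpha}v_d^{-\alpha/d}\,\Gamma(1+\alpha/d). $$
   Context: The on-line nearest-neighbour graph (ONG) on a sequence $(\mathbf x_1,\dots,\mathbf x_n)$ of points in $\mathbb R^d$ joins each $\mathbf x_i$, $i=2,\dots,n$, by an edge to its (Euclidean) nearest neighbour among $\mathbf x_1,\dots,\mathbf x_{i-1}$ (ties broken by lexicographic order). $\mathcal O^{d,\alpha}(\mathcal U_n)$ is the total power-weighted edge length $\sum_{\text{edges}}\|\mathbf u-\mathbf v\|^\alpha$ of the ONG on $\mathcal U_n$. $v_d=\pi^{d/2}/\Gamma(1+d/2)$ is the volume of the unit $d$-ball. *)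

theory Defs
  imports "HOL-Probability.Probability"
begin

text \<open>Power weight r^alpha of an edge of length r, with the convention 0^0 = 1
  (so that for alpha = 0 every edge has weight 1).\<close>
definition pow_weight :: "real \<Rightarrow> real \<Rightarrow> real" where
  "pow_weight \<alpha> r = (if r = 0 then (if \<alpha> = 0 then 1 else 0) else r powr \<alpha>)"

text \<open>Distance from point x_i to its nearest neighbour among x_0, ..., x_(i-1);
  this is the length of the edge of the on-line nearest-neighbour graph added at step i
  (independent of how ties are broken).\<close>
definition ong_nn_dist :: "(nat \<Rightarrow> 'a::metric_space) \<Rightarrow> nat \<Rightarrow> real" where
  "ong_nn_dist x i = Min ((\<lambda>j. dist (x i) (x j)) ` {..<i})"

text \<open>Total power-weighted edge length of the ONG on the sequence (x_0, ..., x_(n-1)).\<close>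
definition ong_weight :: "real \<Rightarrow> (nat \<Rightarrow> 'a::metric_space) \<Rightarrow> nat \<Rightarrow> real" where
  "ong_weight \<alpha> x n = (\<Sum>i\<in>{1..<n}. pow_weight \<alpha> (ong_nn_dist x i))"

definition unit_ball_volume :: "nat \<Rightarrow> real" where
  "unit_ball_volume d = pi powr (real d / 2) / Gamma (1 + real d / 2)"

end

theory Submission
  imports Defs
begin

lemma gamma_power_has_integral:
  fixes q lam :: real and d :: nat
  assumes q: "q > 0" and lam: "lam > 0" and d: "d > 0"
  shows "((\<lambda>t. t powr (q - 1) * exp (- lam * t ^ d)) has_integral
           (Gamma (q / d) / (d * lam powr (q / d)))) {0<..}"
proof -
  define f where "f = (\<lambda>u::real. u powr (q / d - 1) / exp u)"
  define g where "g = (\<lambda>t::real. lam * t ^ d)"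
  define g' where "g' = (\<lambda>t::real. lam * (d * t ^ (d - 1)))"
  have qd: "q / d > 0" using q d by simp
  have G0: "(f has_integral Gamma (q / d)) {0..}"
    unfolding f_def by (rule Gamma_integral_real[OF qd])
  have G1: "(f has_integral Gamma (q / d)) {0<..}"
    using G0 by (subst has_integral_spike_set_eq[where T="{0..}"]) 
       (auto intro: negligible_subset[of "{0}"])
  have f_nn: "\<And>u. u \<in> {0<..} \<Longrightarrow> 0 \<le> f u" unfolding f_def by auto
  have Gabs: "f absolutely_integrable_on {0<..}"
    using G1 f_nn by (intro nonnegative_absolutely_integrable) (auto simp: has_integral_integrable)
  have img: "g ` {0<..} = {0<..}"
  proof safe
    fix u :: real assume "0 < u"
    define t where "t = root d (u / lam)"
    have "t > 0" using \<open>0<u\<close> lam d by (simp add: t_def)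
    moreover have "g t = u" using \<open>0<u\<close> lam d by (simp add: g_def t_def)
    ultimately show "u \<in> g ` {0<..}" by force
  qed (use lam in \<open>auto simp: g_def\<close>)
  have inj: "inj_on g {0<..}"
    unfolding inj_on_def g_def using lam d by (auto simp: power_eq_iff_eq_base)
  have der: "(g has_field_derivative g' t) (at t within {0<..})" for t
    unfolding g_def g'_def by (auto intro!: derivative_eq_intros)
  have CV: "(\<lambda>x. \<bar>g' x\<bar> * f (g x)) absolutely_integrable_on {0<..} \<and>
           integral {0<..} (\<lambda>x. \<bar>g' x\<bar> * f (g x)) = Gamma (q / d)"
    using has_absolute_integral_change_of_variables_1'[of "{0<..}" g g' f "Gamma (q/d)", OF _ der inj]
      img Gabs G1 by (auto simp: integral_unique)
  have eq: "\<bar>g' t\<bar> * f (g t) = (d * lam powr (q / d)) * (t powr (q - 1) * exp (- lam * t ^ d))"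
    if "t > 0" for t
  proof -
    have "\<bar>g' t\<bar> = lam * d * t ^ (d - 1)" using that lam by (simp add: g'_def)
    moreover have "f (g t) = lam powr (q / d - 1) * t powr (q - d) / exp (lam * t ^ d)"
    proof -
      have e: "(q * real d - real d * real d) / real d = q - d" using d by (simp add: field_simps)
      show ?thesis
      using that lam d unfolding f_def g_def
      by (simp add: powr_mult powr_realpow[symmetric] powr_powr field_simps e)
    qed
    moreover have "t ^ (d - 1) = t powr (real d - 1)"
      using that d by (simp add: powr_realpow[symmetric] of_nat_diff)
    ultimately have "\<bar>g' t\<bar> * f (g t) = d * (lam * lam powr (q / d - 1)) * (t powr (real d - 1) * t powr (q - d))
          / exp (lam * t ^ d)" by (simp add: field_simps)
    also have "lam * lam powr (q / d - 1) = lam powr (q / d)"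
      using lam by (simp add: powr_diff)
    also have "t powr (real d - 1) * t powr (q - d) = t powr (q - 1)"
      using that by (simp add: powr_add[symmetric])
    finally show ?thesis by (simp add: exp_minus field_simps)
  qed
  have CV2: "((\<lambda>x. \<bar>g' x\<bar> * f (g x)) has_integral Gamma (q / d)) {0<..}"
    using CV by (metis absolutely_integrable_on_def has_integral_integrable_integral)
  have CV3: "((\<lambda>t. (d * lam powr (q / d)) * (t powr (q - 1) * exp (- lam * t ^ d))) has_integral Gamma (q / d)) {0<..}"
    using CV2 by (rule has_integral_eq[rotated]) (use eq in auto)
  have pos: "d * lam powr (q / d) > 0" using d lam by simp
  have "((\<lambda>t. (1 / (d * lam powr (q / d))) * ((d * lam powr (q / d)) * (t powr (q - 1) * exp (- lam * t ^ d))))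
          has_integral (1 / (d * lam powr (q / d))) * Gamma (q / d)) {0<..}"
    by (rule has_integral_mult_right[OF CV3])
  moreover have "(\<lambda>t. (1 / (d * lam powr (q / d))) * ((d * lam powr (q / d)) * (t powr (q - 1) * exp (- lam * t ^ d))))
     = (\<lambda>t. t powr (q - 1) * exp (- lam * t ^ d))" using pos lam d by (intro ext) simp
  ultimately show ?thesis by simp
qed

lemma gamma_power_nn_integral:
  fixes q lam :: real and d :: nat
  assumes q: "q > 0" and lam: "lam > 0" and d: "d > 0"
  shows "(\<integral>\<^sup>+t. ennreal (indicator {0<..} t * (t powr (q - 1) * exp (- lam * t ^ d))) \<partial>lborel)
          = ennreal (Gamma (q / d) / (d * lam powr (q / d)))"
  using nn_integral_has_integral_lebesgue[OF _ gamma_power_has_integral[OF assms]] by simp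

definition UC :: "'a::euclidean_space measure" where
  "UC = uniform_measure lborel (box 0 One)"

lemma emeasure_box01: "emeasure lborel (box 0 (One::'a::euclidean_space)) = 1"
  by (simp add: emeasure_lborel_box_eq)

lemma prob_space_UC: "prob_space (UC :: 'a::euclidean_space measure)"
  unfolding UC_def by (rule prob_space_uniform_measure) (auto simp: emeasure_box01)

lemma sets_UC[measurable_cong, simp]: "sets UC = sets borel"
  by (simp add: UC_def)

lemma space_UC[simp]: "space UC = UNIV"
  by (simp add: UC_def)

lemma emeasure_UC: "A \<in> sets borel \<Longrightarrow> emeasure UC A = emeasure lborel (A \<inter> box 0 One)"
  unfolding UC_def by (subst emeasure_uniform_measure) (auto simp: emeasure_box01 Int_commute divide_ennreal_def)

lemma AE_UC: "AE x in (UC::'a::euclidean_space measure). x \<in> box 0 One"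
proof -
  have e: "(UNIV - box 0 (One::'a)) \<inter> box 0 One = {}" by auto
  have "emeasure UC (UNIV - box 0 (One::'a)) = 0"
    by (subst emeasure_UC) (auto simp only: e emeasure_empty, measurable)
  then show ?thesis
    by (intro AE_I[of _ _ "UNIV - box 0 One"]) auto
qed

definition capv :: "'a::euclidean_space \<Rightarrow> real \<Rightarrow> real" where
  "capv x r = measure UC (cball x r)"

lemma capv_nonneg: "0 \<le> capv x r"
  by (simp add: capv_def)

lemma capv_le1: "capv x r \<le> 1"
  unfolding capv_def by (metis prob_space.prob_le_1 prob_space_UC)

lemma capv_eq_lborel: "capv x r = measure lborel (cball x r \<inter> box 0 One)"
  unfolding capv_def measure_def by (subst emeasure_UC) auto

lemma unit_ball_volume_eq: "unit_ball_volume d = unit_ball_vol d"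
  by (simp add: unit_ball_volume_def unit_ball_vol_def add_ac)

lemma capv_inside:
  assumes "cball x r \<subseteq> box 0 One" "r \<ge> 0"
  shows "capv (x::'a::euclidean_space) r = unit_ball_vol DIM('a) * r ^ DIM('a)"
proof -
  have "cball x r \<inter> box 0 One = cball x r" using assms by auto
  then show ?thesis using assms
    by (simp add: capv_eq_lborel measure_def emeasure_cball)
qed

lemma capv_upper:
  assumes "r \<ge> 0"
  shows "capv (x::'a::euclidean_space) r \<le> unit_ball_vol DIM('a) * r ^ DIM('a)"
proof -
  have "measure lborel (cball x r \<inter> box 0 One) \<le> measure lborel (cball x r)"
  proof (rule measure_mono_fmeasurable)
    show "cball x r \<in> fmeasurable lborel"
      by (rule fmeasurable_compact) simp
  qed auto
  then show ?thesis using assms by (simp add: capv_eq_lborel measure_def emeasure_cball)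
qed

lemma capv_lower:
  assumes x: "x \<in> cbox 0 One" and r: "r \<ge> 0"
  shows "min (r / DIM('a)) 1 ^ DIM('a) \<le> capv (x::'a::euclidean_space) r"
proof -
  define h where "h = min (r / DIM('a)) 1"
  have h0: "0 \<le> h" and h1: "h \<le> 1" using r by (auto simp: h_def)
  have hr: "DIM('a) * h \<le> r" using r by (auto simp: h_def field_simps min_def)
  define l :: 'a where "l = (\<Sum>b\<in>Basis. min (x \<bullet> b) (1 - h) *\<^sub>R b)"
  have lb: "l \<bullet> b = min (x \<bullet> b) (1 - h)" if "b \<in> Basis" for b
    using that by (simp add: l_def inner_sum_left inner_Basis if_distrib cong: if_cong)
  have xb: "0 \<le> x \<bullet> b \<and> x \<bullet> b \<le> 1" if "b \<in> Basis" for b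
    using x that by (auto simp: mem_box)
  define B where "B = box l (l + h *\<^sub>R One)"
  have B1: "B \<subseteq> box 0 One"
  proof
    fix z assume "z \<in> B"
    then have "\<forall>b\<in>Basis. l \<bullet> b < z \<bullet> b \<and> z \<bullet> b < l \<bullet> b + h"
      by (auto simp: B_def mem_box inner_add_left)
    then show "z \<in> box 0 One" using xb h0 h1
      by (auto simp: mem_box lb) (smt (verit, best))+
  qed
  have B2: "B \<subseteq> cball x r"
  proof
    fix z assume "z \<in> B"
    then have zb: "\<forall>b\<in>Basis. l \<bullet> b < z \<bullet> b \<and> z \<bullet> b < l \<bullet> b + h"
      by (auto simp: B_def mem_box inner_add_left)
    have "\<bar>(x - z) \<bullet> b\<bar> \<le> h" if "b \<in> Basis" for b
      using zb that xb[OF that] lb[OF that] by (auto simp: inner_diff_left) 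
    then have "(\<Sum>b\<in>Basis. \<bar>(x - z) \<bullet> b\<bar>) \<le> (\<Sum>b\<in>(Basis::'a set). h)"
      by (intro sum_mono) auto
    then have "norm (x - z) \<le> DIM('a) * h"
      using norm_le_l1[of "x - z"] by simp
    then show "z \<in> cball x r" using hr by (simp add: dist_norm)
  qed
  have "emeasure lborel B = ennreal (h ^ DIM('a))"
  proof (cases "h = 0")
    case True then show ?thesis by (simp add: B_def)
  next
    case False
    then have "\<forall>b\<in>Basis. l \<bullet> b \<le> (l + h *\<^sub>R One) \<bullet> b" using h0 by (auto simp: inner_add_left)
    then show ?thesis
      by (simp add: B_def emeasure_lborel_box_eq inner_add_left prod_constant)
  qed
  then have "measure lborel B = h ^ DIM('a)" using h0 by (simp add: measure_def)
  moreover have "measure lborel B \<le> measure lborel (cball x r \<inter> box 0 One)"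
  proof (rule measure_mono_fmeasurable)
    show "B \<subseteq> cball x r \<inter> box 0 One" using B1 B2 by auto
    show "B \<in> sets lborel" by (simp add: B_def)
    have "emeasure lborel (cball x r \<inter> box 0 One) \<le> emeasure lborel (box 0 (One::'a))"
      by (intro emeasure_mono) auto
    then show "cball x r \<inter> box 0 One \<in> fmeasurable lborel"
      by (auto simp: fmeasurable_def emeasure_box01 top_unique intro: le_less_trans)
  qed
  ultimately have "h ^ DIM('a) \<le> measure lborel (cball x r \<inter> box 0 One)" by simp
  then show ?thesis unfolding h_def capv_eq_lborel .
qed

lemma capv_measurable_pair:
  "(\<lambda>p. capv (fst p) (snd p)) \<in> borel_measurable (borel \<Otimes>\<^sub>M (borel :: real measure) :: ('a::euclidean_space \<times> real) measure)"
proof -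
  interpret UCp: prob_space "UC :: 'a measure" by (rule prob_space_UC)
  define Q :: "(('a \<times> real) \<times> 'a) set" where "Q = {(p, z). dist (fst p) z \<le> snd p}"
  have Q: "Q \<in> sets ((borel \<Otimes>\<^sub>M borel) \<Otimes>\<^sub>M UC)"
  proof -
    have "Q = {w \<in> space ((borel \<Otimes>\<^sub>M borel) \<Otimes>\<^sub>M UC). dist (fst (fst w)) (snd w) \<le> snd (fst w)}"
      by (auto simp: Q_def space_pair_measure)
    also have "\<dots> \<in> sets ((borel \<Otimes>\<^sub>M borel) \<Otimes>\<^sub>M UC)"
      by measurable
    finally show ?thesis .
  qed
  have "(\<lambda>p. emeasure UC (Pair p -` Q)) \<in> borel_measurable (borel \<Otimes>\<^sub>M borel)"
    by (rule UCp.measurable_emeasure_Pair[OF Q])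
  then have "(\<lambda>p. enn2real (emeasure UC (Pair p -` Q))) \<in> borel_measurable (borel \<Otimes>\<^sub>M borel)"
    by measurable
  moreover have "Pair p -` Q = cball (fst p) (snd p)" for p
    by (auto simp: Q_def)
  ultimately show ?thesis
    by (simp add: capv_def measure_def)
qed

lemma capv_measurable[measurable (raw)]:
  assumes "f \<in> borel_measurable M" "g \<in> borel_measurable M"
  shows "(\<lambda>x. capv (f x) (g x :: real)) \<in> borel_measurable M"
proof -
  have "(\<lambda>x. (f x, g x)) \<in> measurable M (borel \<Otimes>\<^sub>M borel)"
    using assms by measurable
  from measurable_comp[OF this capv_measurable_pair] show ?thesis by (simp add: o_def)
qed

definition wp :: "real \<Rightarrow> real \<Rightarrow> real" where
  "wp a t = indicator {0<..} t * (a * t powr (a - 1))"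

lemma wp_nonneg: "a \<ge> 0 \<Longrightarrow> 0 \<le> wp a t"
  by (simp add: wp_def)

lemma wp_measurable[measurable]: "wp a \<in> borel_measurable borel"
  unfolding wp_def by measurable

lemma tail_formula:
  assumes a: "a > 0" and D: "D \<ge> 0"
  shows "ennreal (D powr a) = (\<integral>\<^sup>+t. ennreal (wp a t * indicator {..<D} t) \<partial>lborel)"
proof -
  have "((\<lambda>x. x powr (a - 1)) has_integral (D powr (a - 1 + 1) / (a - 1 + 1))) {0..D}"
    by (rule has_integral_powr_from_0) (use a D in auto)
  then have "((\<lambda>x. a * x powr (a - 1)) has_integral a * (D powr a / a)) {0..D}"
    by (intro has_integral_mult_right) simp
  then have "((\<lambda>x. a * x powr (a - 1)) has_integral D powr a) {0..D}"
    using a by simp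
  from nn_integral_has_integral_lebesgue[OF _ this]
  have "(\<integral>\<^sup>+x. ennreal (indicator {0..D} x * (a * x powr (a - 1))) \<partial>lborel) = ennreal (D powr a)"
    using a by simp
  moreover have "(\<integral>\<^sup>+x. ennreal (indicator {0..D} x * (a * x powr (a - 1))) \<partial>lborel) =
      (\<integral>\<^sup>+t. ennreal (wp a t * indicator {..<D} t) \<partial>lborel)"
  proof (rule nn_integral_cong_AE)
    have "AE x in lborel. x \<noteq> 0" "AE x in lborel. x \<noteq> D" by (rule AE_lborel_singleton)+
    then show "AE x in lborel. ennreal (indicator {0..D} x * (a * x powr (a - 1))) =
         ennreal (wp a x * indicator {..<D} x)"
      by eventually_elim (auto simp: wp_def indicator_def)
  qed
  ultimately show ?thesis by simp
qed

lemma ong_nn_dist_nonneg: "i \<ge> 1 \<Longrightarrow> 0 \<le> ong_nn_dist x i"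
  unfolding ong_nn_dist_def by (subst Min_ge_iff) (auto simp: lessThan_empty_iff)

lemma ong_nn_dist_gt_iff: "i \<ge> 1 \<Longrightarrow> t < ong_nn_dist x i \<longleftrightarrow> (\<forall>k<i. t < dist (x i) (x k))"
  unfolding ong_nn_dist_def by (subst Min_gr_iff) (auto simp: lessThan_empty_iff)

lemma prob_space_PP: "prob_space (PiM I (\<lambda>_. UC :: 'a::euclidean_space measure))"
  by (intro prob_space_PiM prob_space_UC)

lemma product_prob_space_UC: "product_prob_space (\<lambda>_. UC :: 'a::euclidean_space measure)"
  by (intro product_prob_spaceI prob_space_UC)

lemma nnd_measurable[measurable]:
  assumes "i \<in> I" "{..<i} \<subseteq> I"
  shows "(\<lambda>x. ong_nn_dist x i) \<in> borel_measurable (PiM I (\<lambda>_. UC :: 'a::euclidean_space measure))"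
  unfolding ong_nn_dist_def
proof (rule borel_measurable_Min)
  fix j assume "j \<in> {..<i}"
  then have "j \<in> I" using assms by auto
  then show "(\<lambda>x. dist (x i) (x j)) \<in> borel_measurable (PiM I (\<lambda>_. UC :: 'a measure))"
    using assms by measurable
qed simp

lemma prod_indicator_ennreal:
  assumes "finite K"
  shows "(\<Prod>k\<in>K. (indicator (A k) (f k) :: ennreal)) = (if \<forall>k\<in>K. f k \<in> A k then 1 else 0)"
  using assms by (induction K rule: finite_induct) (auto simp: indicator_def)

lemma transfer:
  fixes U :: "nat \<Rightarrow> 'b \<Rightarrow> 'a::euclidean_space"
  assumes M: "prob_space M" and ind: "prob_space.indep_vars M (\<lambda>_. borel) U UNIV"
    and distr: "\<And>i. distr M borel (U i) = UC"
    and I: "finite I" "I \<noteq> {}"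
    and f: "f \<in> borel_measurable (PiM I (\<lambda>_. UC :: 'a measure))"
  shows "(\<integral>\<^sup>+\<omega>. f (\<lambda>k\<in>I. U k \<omega>) \<partial>M) = (\<integral>\<^sup>+x. f x \<partial>PiM I (\<lambda>_. UC))"
proof -
  interpret prob_space M by (rule M)
  have rv: "\<And>i. random_variable borel (U i)"
    using ind unfolding indep_vars_def by auto
  have indI: "indep_vars (\<lambda>_. borel) U I"
    by (rule indep_vars_subset[OF ind]) auto
  have "distr M (PiM I (\<lambda>_. borel)) (\<lambda>x. \<lambda>i\<in>I. U i x) = PiM I (\<lambda>i. distr M borel (U i))"
    using indep_vars_iff_distr_eq_PiM[where I=I and M'="\<lambda>_. borel" and X=U] I(2) rv indI by simp
  also have "\<dots> = PiM I (\<lambda>_. UC)" by (simp add: distr)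
  finally have D: "distr M (PiM I (\<lambda>_. borel)) (\<lambda>x. \<lambda>i\<in>I. U i x) = PiM I (\<lambda>_. UC)" .
  have "sets (PiM I (\<lambda>_. UC)) = sets (PiM I (\<lambda>_. borel :: 'a measure))"
    by (intro sets_PiM_cong) auto
  then have f': "f \<in> borel_measurable (PiM I (\<lambda>_. borel))"
    using f measurable_cong_sets[OF _ refl] by blast
  have T: "(\<lambda>x. \<lambda>i\<in>I. U i x) \<in> measurable M (PiM I (\<lambda>_. borel))"
    using rv by measurable
  have "(\<integral>\<^sup>+x. f x \<partial>PiM I (\<lambda>_. UC)) = (\<integral>\<^sup>+x. f x \<partial>distr M (PiM I (\<lambda>_. borel)) (\<lambda>x. \<lambda>i\<in>I. U i x))"
    by (simp add: D)
  also have "\<dots> = (\<integral>\<^sup>+\<omega>. f (\<lambda>k\<in>I. U k \<omega>) \<partial>M)"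
    by (rule nn_integral_distr[OF T]) (simp add: f')
  finally show ?thesis ..
qed

lemma emeasure_UC_far:
  "emeasure UC {z. t < dist y z} = ennreal (1 - capv (y::'a::euclidean_space) t)"
proof -
  interpret UCp: prob_space "UC :: 'a measure" by (rule prob_space_UC)
  have "{z. t < dist y z} = space UC - cball y t" by (auto simp: not_le)
  then have "emeasure UC {z. t < dist y z} = ennreal (UCp.prob (space UC - cball y t))"
    by (simp add: UCp.emeasure_eq_measure)
  also have "UCp.prob (space UC - cball y t) = 1 - capv y t"
    by (subst UCp.prob_compl) (auto simp: capv_def)
  finally show ?thesis .
qed

lemma one_point_prob:
  assumes i: "i \<ge> 1"
  shows "(\<integral>\<^sup>+x. indicator {..<ong_nn_dist x i} t \<partial>PiM {..i} (\<lambda>_. UC :: 'a measure)) =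
         (\<integral>\<^sup>+y. ennreal ((1 - capv (y::'a::euclidean_space) t) ^ i) \<partial>UC)"
proof -
  interpret PS: product_prob_space "\<lambda>_::nat. UC :: 'a measure" by (rule product_prob_space_UC)
  have eq: "indicator {..<ong_nn_dist x i} t = (\<Prod>k\<in>{..<i}. (indicator {z. t < dist (x i) z} (x k) :: ennreal))" for x :: "nat \<Rightarrow> 'a"
    using i by (subst prod_indicator_ennreal) (auto simp: ong_nn_dist_gt_iff indicator_def)
  have "(\<integral>\<^sup>+x. indicator {..<ong_nn_dist x i} t \<partial>PiM {..i} (\<lambda>_. UC :: 'a measure)) =
     (\<integral>\<^sup>+x. (\<Prod>k\<in>{..<i}. (indicator {z. t < dist (x i) z} (x k) :: ennreal)) \<partial>PiM (insert i {..<i}) (\<lambda>_. UC :: 'a measure))"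
  proof -
    have e2: "{..i} = insert i {..<i}" by auto
    show ?thesis unfolding e2 by (intro nn_integral_cong) (rule eq)
  qed
  also have "\<dots> = (\<integral>\<^sup>+y. (\<integral>\<^sup>+x. (\<Prod>k\<in>{..<i}. (indicator {z. t < dist ((x(i:=y)) i) z} ((x(i:=y)) k) :: ennreal)) \<partial>PiM {..<i} (\<lambda>_. UC :: 'a measure)) \<partial>UC)"
    by (rule PS.product_nn_integral_insert_rev) auto
  also have "\<dots> = (\<integral>\<^sup>+y. (\<integral>\<^sup>+x. (\<Prod>k\<in>{..<i}. (indicator {z. t < dist y z} (x k) :: ennreal)) \<partial>PiM {..<i} (\<lambda>_. UC :: 'a measure)) \<partial>UC)"
    by (intro nn_integral_cong prod.cong) auto
  also have "\<dots> = (\<integral>\<^sup>+y. (\<Prod>k\<in>{..<i}. emeasure UC {z. t < dist (y::'a) z}) \<partial>UC)"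
    by (subst PS.product_nn_integral_prod) auto
  also have "\<dots> = (\<integral>\<^sup>+y. ennreal ((1 - capv (y::'a::euclidean_space) t) ^ i) \<partial>UC)"
    by (intro nn_integral_cong) (simp add: emeasure_UC_far ennreal_power capv_le1)
  finally show ?thesis .
qed

definition Mi :: "'a::euclidean_space itself \<Rightarrow> real \<Rightarrow> nat \<Rightarrow> ennreal" where
  "Mi _ a n = (\<integral>\<^sup>+t. ennreal (wp a t) * (\<integral>\<^sup>+y. ennreal ((1 - capv (y::'a) t) ^ n) \<partial>UC) \<partial>lborel)"

lemma one_point:
  assumes i: "i \<ge> 1" and a: "a > 0"
  shows "(\<integral>\<^sup>+x. ennreal (ong_nn_dist x i powr a) \<partial>PiM {..i} (\<lambda>_. UC :: 'a::euclidean_space measure))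
          = Mi TYPE('a) a i"
proof -
  define P where "P = PiM {..i} (\<lambda>_. UC :: 'a measure)"
  interpret P: prob_space P unfolding P_def by (rule prob_space_PP)
  interpret LP: pair_sigma_finite lborel P
    by (intro pair_sigma_finite.intro sigma_finite_lborel P.sigma_finite_measure_axioms)
  have meas: "(\<lambda>x. ong_nn_dist x i) \<in> borel_measurable P"
    unfolding P_def by (rule nnd_measurable) auto
  have "(\<integral>\<^sup>+x. ennreal (ong_nn_dist x i powr a) \<partial>P) =
        (\<integral>\<^sup>+x. (\<integral>\<^sup>+t. ennreal (wp a t * indicator {..<ong_nn_dist x i} t) \<partial>lborel) \<partial>P)"
    using i a by (intro nn_integral_cong tail_formula) (auto intro: ong_nn_dist_nonneg)
  also have "\<dots> = (\<integral>\<^sup>+t. (\<integral>\<^sup>+x. ennreal (wp a t * indicator {..<ong_nn_dist x i} t) \<partial>P) \<partial>lborel)"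
  proof (rule LP.Fubini')
    have "(\<lambda>p. ennreal (wp a (fst p) * (if fst p < ong_nn_dist (snd p) i then 1 else 0)))
        \<in> borel_measurable (lborel \<Otimes>\<^sub>M P)"
      using meas by measurable
    then show "(\<lambda>(t, x). ennreal (wp a t * indicator {..<ong_nn_dist x i} t)) \<in> borel_measurable (lborel \<Otimes>\<^sub>M P)"
      by (rule measurable_cong[THEN iffD1, rotated]) (auto simp: indicator_def)
  qed
  also have "\<dots> = (\<integral>\<^sup>+t. ennreal (wp a t) * (\<integral>\<^sup>+x. indicator {..<ong_nn_dist x i} t \<partial>P) \<partial>lborel)"
  proof (intro nn_integral_cong)
    fix t
    have m2: "(\<lambda>x. indicator {..<ong_nn_dist x i} t :: ennreal) \<in> borel_measurable P"
    proof -
      have "(\<lambda>x. if t < ong_nn_dist x i then 1 else 0 :: ennreal) \<in> borel_measurable P"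
        using meas by measurable
      then show ?thesis by (rule measurable_cong[THEN iffD1, rotated]) (auto simp: indicator_def)
    qed
    show "(\<integral>\<^sup>+x. ennreal (wp a t * indicator {..<ong_nn_dist x i} t) \<partial>P) =
        ennreal (wp a t) * (\<integral>\<^sup>+x. indicator {..<ong_nn_dist x i} t \<partial>P)"
      using a by (subst nn_integral_cmult[symmetric, OF m2])
        (auto intro!: nn_integral_cong simp: ennreal_mult wp_nonneg indicator_def)
  qed
  also have "\<dots> = Mi TYPE('a) a i"
    unfolding Mi_def P_def using i by (simp add: one_point_prob)
  finally show ?thesis unfolding P_def .
qed

lemma emeasure_UC_far2:
  "emeasure UC {w. t < dist y w \<and> s < dist z w} = ennreal (1 - measure UC (cball (y::'a::euclidean_space) t \<union> cball z s))"
proof -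
  interpret UCp: prob_space "UC :: 'a measure" by (rule prob_space_UC)
  have "{w. t < dist y w \<and> s < dist z w} = space UC - (cball y t \<union> cball z s)" by (auto simp: not_le)
  then have "emeasure UC {w. t < dist y w \<and> s < dist z w} = ennreal (UCp.prob (space UC - (cball y t \<union> cball z s)))"
    by (simp add: UCp.emeasure_eq_measure)
  also have "UCp.prob (space UC - (cball y t \<union> cball z s)) = 1 - measure UC (cball y t \<union> cball z s)"
    by (subst UCp.prob_compl) auto
  finally show ?thesis .
qed

definition Q2 :: "'a::euclidean_space itself \<Rightarrow> nat \<Rightarrow> nat \<Rightarrow> real \<Rightarrow> real \<Rightarrow> ennreal" where
  "Q2 _ i j t s = (\<integral>\<^sup>+z. \<integral>\<^sup>+y. indicator {w. s < dist z w} (y::'a) *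
       (ennreal (1 - measure UC (cball y t \<union> cball z s))) ^ i * (ennreal (1 - capv z s)) ^ (j - Suc i) \<partial>UC \<partial>UC)"

lemma two_point_prob:
  assumes i: "i \<ge> 1" and ij: "i < j"
  shows "(\<integral>\<^sup>+x. indicator {..<ong_nn_dist x i} t * indicator {..<ong_nn_dist x j} s
             \<partial>PiM {..j} (\<lambda>_. UC :: 'a::euclidean_space measure)) = Q2 TYPE('a) i j t s"
proof -
  interpret PS: product_prob_space "\<lambda>_::nat. UC :: 'a measure" by (rule product_prob_space_UC)
  define R where "R = {..<i} \<union> {i<..<j}"
  have R: "finite R" "i \<notin> R" "j \<notin> R" "finite (insert i R)" "j \<notin> insert i R"
    using ij by (auto simp: R_def)
  have Rj: "{..j} = insert j (insert i R)" using ij by (auto simp: R_def)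
  define S where "S = (\<lambda>k (y::'a) (z::'a). if k < i then {w. t < dist y w \<and> s < dist z w} else {w. s < dist z w})"
  have S_meas: "S k y z \<in> sets UC" for k y z
  proof -
    have "{w. t < dist y w \<and> s < dist z w} \<in> sets (borel :: 'a measure)" by measurable
    moreover have "{w. s < dist z w} \<in> sets (borel :: 'a measure)" by measurable
    ultimately show ?thesis by (simp add: S_def)
  qed
  have eq: "indicator {..<ong_nn_dist x i} t * indicator {..<ong_nn_dist x j} s =
      indicator {w. s < dist (x j) w} (x i) * (\<Prod>k\<in>R. (indicator (S k (x i) (x j)) (x k) :: ennreal))"
    for x :: "nat \<Rightarrow> 'a"
  proof -
    have j1: "j \<ge> 1" using i ij by simp
    have lt: "k < j \<longleftrightarrow> k \<in> R \<or> k = i" for k using ij by (auto simp: R_def)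
    have "(t < ong_nn_dist x i \<and> s < ong_nn_dist x j) \<longleftrightarrow>
          (s < dist (x j) (x i) \<and> (\<forall>k\<in>R. x k \<in> S k (x i) (x j)))"
      unfolding ong_nn_dist_gt_iff[OF i] ong_nn_dist_gt_iff[OF j1] lt
      by (auto simp: S_def R_def dist_commute)
    then show ?thesis
      by (subst prod_indicator_ennreal[OF R(1)]) (auto simp: indicator_def)
  qed
  have "(\<integral>\<^sup>+x. indicator {..<ong_nn_dist x i} t * indicator {..<ong_nn_dist x j} s \<partial>PiM {..j} (\<lambda>_. UC :: 'a measure))
     = (\<integral>\<^sup>+x. indicator {w. s < dist (x j) w} (x i) * (\<Prod>k\<in>R. (indicator (S k (x i) (x j)) (x k) :: ennreal))
          \<partial>PiM (insert j (insert i R)) (\<lambda>_. UC :: 'a measure))"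
    unfolding Rj by (intro nn_integral_cong) (rule eq)
  also have "\<dots> = (\<integral>\<^sup>+z. (\<integral>\<^sup>+x. indicator {w. s < dist ((x(j:=z)) j) w} ((x(j:=z)) i) *
        (\<Prod>k\<in>R. (indicator (S k ((x(j:=z)) i) ((x(j:=z)) j)) ((x(j:=z)) k) :: ennreal))
          \<partial>PiM (insert i R) (\<lambda>_. UC :: 'a measure)) \<partial>UC)"
  proof (rule PS.product_nn_integral_insert_rev[OF R(4,5)])
    have "(\<lambda>x. indicator {w. s < dist (x j) w} (x i) * (\<Prod>k\<in>R. (indicator (S k (x i) (x j)) (x k) :: ennreal)))
      = (\<lambda>x. (if s < dist (x j) (x i) then 1 else 0) * (\<Prod>k\<in>R. (if k < i then (if t < dist (x i) (x k) \<and> s < dist (x j) (x k) then 1 else 0) else (if s < dist (x j) (x k) then 1 else 0) :: ennreal)))"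
      by (intro ext arg_cong2[where f="(*)"] prod.cong) (auto simp: S_def indicator_def)
    moreover have "\<dots> \<in> borel_measurable (PiM (insert j (insert i R)) (\<lambda>_. UC :: 'a measure))"
      using R by measurable
    ultimately show "(\<lambda>x. indicator {w. s < dist (x j) w} (x i) * (\<Prod>k\<in>R. (indicator (S k (x i) (x j)) (x k) :: ennreal)))
      \<in> borel_measurable (PiM (insert j (insert i R)) (\<lambda>_. UC :: 'a measure))" by simp
  qed
  also have "\<dots> = (\<integral>\<^sup>+z. (\<integral>\<^sup>+x. indicator {w. s < dist z w} (x i) *
        (\<Prod>k\<in>R. (indicator (S k (x i) z) (x k) :: ennreal))
          \<partial>PiM (insert i R) (\<lambda>_. UC :: 'a measure)) \<partial>UC)"
    using R by (intro nn_integral_cong arg_cong2[where f="(*)"] prod.cong) auto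
  also have "\<dots> = (\<integral>\<^sup>+z. (\<integral>\<^sup>+y. (\<integral>\<^sup>+x. indicator {w. s < dist z w} ((x(i:=y)) i) *
        (\<Prod>k\<in>R. (indicator (S k ((x(i:=y)) i) z) ((x(i:=y)) k) :: ennreal))
          \<partial>PiM R (\<lambda>_. UC :: 'a measure)) \<partial>UC) \<partial>UC)"
  proof (intro nn_integral_cong PS.product_nn_integral_insert_rev[OF R(1,2)])
    fix z :: 'a
    have "(\<lambda>x. indicator {w. s < dist z w} (x i) * (\<Prod>k\<in>R. (indicator (S k (x i) z) (x k) :: ennreal)))
      = (\<lambda>x. (if s < dist z (x i) then 1 else 0) * (\<Prod>k\<in>R. (if k < i then (if t < dist (x i) (x k) \<and> s < dist z (x k) then 1 else 0) else (if s < dist z (x k) then 1 else 0) :: ennreal)))"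
      by (intro ext arg_cong2[where f="(*)"] prod.cong) (auto simp: S_def indicator_def)
    moreover have "\<dots> \<in> borel_measurable (PiM (insert i R) (\<lambda>_. UC :: 'a measure))"
      using R by measurable
    ultimately show "(\<lambda>x. indicator {w. s < dist z w} (x i) * (\<Prod>k\<in>R. (indicator (S k (x i) z) (x k) :: ennreal)))
      \<in> borel_measurable (PiM (insert i R) (\<lambda>_. UC :: 'a measure))" by simp
  qed
  also have "\<dots> = (\<integral>\<^sup>+z. (\<integral>\<^sup>+y. indicator {w. s < dist z w} y * (\<integral>\<^sup>+x.
        (\<Prod>k\<in>R. (indicator (S k y z) (x k) :: ennreal))
          \<partial>PiM R (\<lambda>_. UC :: 'a measure)) \<partial>UC) \<partial>UC)"
  proof (intro nn_integral_cong)
    fix z y :: 'a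
    have "(\<integral>\<^sup>+x. indicator {w. s < dist z w} ((x(i:=y)) i) *
        (\<Prod>k\<in>R. (indicator (S k ((x(i:=y)) i) z) ((x(i:=y)) k) :: ennreal)) \<partial>PiM R (\<lambda>_. UC :: 'a measure))
      = (\<integral>\<^sup>+x. indicator {w. s < dist z w} y * (\<Prod>k\<in>R. (indicator (S k y z) (x k) :: ennreal)) \<partial>PiM R (\<lambda>_. UC :: 'a measure))"
      using R by (intro nn_integral_cong arg_cong2[where f="(*)"] prod.cong) auto
    also have "\<dots> = indicator {w. s < dist z w} y * (\<integral>\<^sup>+x. (\<Prod>k\<in>R. (indicator (S k y z) (x k) :: ennreal)) \<partial>PiM R (\<lambda>_. UC :: 'a measure))"
    proof (rule nn_integral_cmult)
      have "(\<lambda>x. \<Prod>k\<in>R. (indicator (S k y z) (x k) :: ennreal)) = (\<lambda>x. \<Prod>k\<in>R. (if k < i then (if t < dist y (x k) \<and> s < dist z (x k) then 1 else 0) else (if s < dist z (x k) then 1 else 0) :: ennreal))"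
        by (intro ext prod.cong) (auto simp: S_def indicator_def)
      moreover have "\<dots> \<in> borel_measurable (PiM R (\<lambda>_. UC :: 'a measure))"
        using R by measurable
      ultimately show "(\<lambda>x. \<Prod>k\<in>R. (indicator (S k y z) (x k) :: ennreal)) \<in> borel_measurable (PiM R (\<lambda>_. UC :: 'a measure))" by simp
    qed
    finally show "(\<integral>\<^sup>+x. indicator {w. s < dist z w} ((x(i:=y)) i) *
        (\<Prod>k\<in>R. (indicator (S k ((x(i:=y)) i) z) ((x(i:=y)) k) :: ennreal)) \<partial>PiM R (\<lambda>_. UC :: 'a measure))
      = indicator {w. s < dist z w} y * (\<integral>\<^sup>+x. (\<Prod>k\<in>R. (indicator (S k y z) (x k) :: ennreal)) \<partial>PiM R (\<lambda>_. UC :: 'a measure))" .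
  qed
  also have "\<dots> = (\<integral>\<^sup>+z. (\<integral>\<^sup>+y. indicator {w. s < dist z w} y * (\<Prod>k\<in>R. emeasure UC (S k y z)) \<partial>UC) \<partial>UC)"
    using S_meas by (subst PS.product_nn_integral_prod) (auto simp: R)
  also have "\<dots> = Q2 TYPE('a) i j t s"
    unfolding Q2_def
  proof (intro nn_integral_cong)
    fix y z :: 'a
    have "(\<Prod>k\<in>R. emeasure UC (S k y z)) = (\<Prod>k\<in>{..<i}. emeasure UC (S k y z)) * (\<Prod>k\<in>{i<..<j}. emeasure UC (S k y z))"
      unfolding R_def by (rule prod.union_disjoint) auto
    also have "(\<Prod>k\<in>{..<i}. emeasure UC (S k y z)) = (\<Prod>k\<in>{..<i}. ennreal (1 - measure UC (cball y t \<union> cball z s)))"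
      by (intro prod.cong) (auto simp: S_def emeasure_UC_far2)
    also have "(\<Prod>k\<in>{i<..<j}. emeasure UC (S k y z)) = (\<Prod>k\<in>{i<..<j}. ennreal (1 - capv z s))"
      by (intro prod.cong) (auto simp: S_def emeasure_UC_far)
    finally show "indicator {w. s < dist z w} y * (\<Prod>k\<in>R. emeasure UC (S k y z)) =
       indicator {w. s < dist z w} y * (ennreal (1 - measure UC (cball y t \<union> cball z s))) ^ i * (ennreal (1 - capv z s)) ^ (j - Suc i)"
      by (simp add: mult.assoc)
  qed
  finally show ?thesis .
qed

lemma two_point:
  assumes i: "i \<ge> 1" and ij: "i < j" and a: "a > 0"
  shows "(\<integral>\<^sup>+x. ennreal (ong_nn_dist x i powr a * ong_nn_dist x j powr a)
             \<partial>PiM {..j} (\<lambda>_. UC :: 'a::euclidean_space measure))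
       = (\<integral>\<^sup>+t. \<integral>\<^sup>+s. ennreal (wp a t) * ennreal (wp a s) * Q2 TYPE('a) i j t s \<partial>lborel \<partial>lborel)"
proof -
  define P where "P = PiM {..j} (\<lambda>_. UC :: 'a measure)"
  interpret P: prob_space P unfolding P_def by (rule prob_space_PP)
  interpret LP: pair_sigma_finite lborel P
    by (intro pair_sigma_finite.intro sigma_finite_lborel P.sigma_finite_measure_axioms)
  have j1: "j \<ge> 1" using i ij by simp
  have measi[measurable]: "(\<lambda>x. ong_nn_dist x i) \<in> borel_measurable P"
    unfolding P_def by (rule nnd_measurable) (use ij in auto)
  have measj[measurable]: "(\<lambda>x. ong_nn_dist x j) \<in> borel_measurable P"
    unfolding P_def by (rule nnd_measurable) auto
  define g where "g = (\<lambda>l (x::nat \<Rightarrow> 'a) t. ennreal (wp a t * (if t < ong_nn_dist x l then 1 else 0)))"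
  have tf: "ennreal (ong_nn_dist x l powr a) = (\<integral>\<^sup>+t. g l x t \<partial>lborel)" if "l \<ge> 1" for x l
    unfolding g_def using tail_formula[OF a ong_nn_dist_nonneg[OF that, of x]]
    by (simp add: indicator_def of_bool_def)
  have "(\<integral>\<^sup>+x. ennreal (ong_nn_dist x i powr a * ong_nn_dist x j powr a) \<partial>P) =
        (\<integral>\<^sup>+x. (\<integral>\<^sup>+t. g i x t \<partial>lborel) * (\<integral>\<^sup>+s. g j x s \<partial>lborel) \<partial>P)"
    using i j1 by (intro nn_integral_cong) (simp add: ennreal_mult ong_nn_dist_nonneg tf[symmetric])
  also have "\<dots> = (\<integral>\<^sup>+x. (\<integral>\<^sup>+t. (\<integral>\<^sup>+s. g i x t * g j x s \<partial>lborel) \<partial>lborel) \<partial>P)"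
  proof (intro nn_integral_cong)
    fix x
    have "(\<integral>\<^sup>+t. g i x t \<partial>lborel) * (\<integral>\<^sup>+s. g j x s \<partial>lborel) = (\<integral>\<^sup>+t. g i x t * (\<integral>\<^sup>+s. g j x s \<partial>lborel) \<partial>lborel)"
      by (rule nn_integral_multc[symmetric]) (simp add: g_def)
    also have "\<dots> = (\<integral>\<^sup>+t. (\<integral>\<^sup>+s. g i x t * g j x s \<partial>lborel) \<partial>lborel)"
      by (intro nn_integral_cong nn_integral_cmult[symmetric]) (simp add: g_def)
    finally show "(\<integral>\<^sup>+t. g i x t \<partial>lborel) * (\<integral>\<^sup>+s. g j x s \<partial>lborel) = (\<integral>\<^sup>+t. (\<integral>\<^sup>+s. g i x t * g j x s \<partial>lborel) \<partial>lborel)" .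
  qed
  also have "\<dots> = (\<integral>\<^sup>+t. (\<integral>\<^sup>+x. (\<integral>\<^sup>+s. g i x t * g j x s \<partial>lborel) \<partial>P) \<partial>lborel)"
  proof (rule LP.Fubini')
    have "(\<lambda>(p, s). g i (snd p) (fst p) * g j (snd p) s) \<in> borel_measurable ((lborel \<Otimes>\<^sub>M P) \<Otimes>\<^sub>M lborel)"
      unfolding g_def by measurable
    then have "(\<lambda>p. \<integral>\<^sup>+s. g i (snd p) (fst p) * g j (snd p) s \<partial>lborel) \<in> borel_measurable (lborel \<Otimes>\<^sub>M P)"
      by (intro lborel.borel_measurable_nn_integral) simp
    then show "(\<lambda>(t, x). \<integral>\<^sup>+s. g i x t * g j x s \<partial>lborel) \<in> borel_measurable (lborel \<Otimes>\<^sub>M P)"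
      by (simp add: case_prod_beta')
  qed
  also have "\<dots> = (\<integral>\<^sup>+t. (\<integral>\<^sup>+s. (\<integral>\<^sup>+x. g i x t * g j x s \<partial>P) \<partial>lborel) \<partial>lborel)"
  proof (intro nn_integral_cong LP.Fubini')
    fix t
    show "(\<lambda>(s, x). g i x t * g j x s) \<in> borel_measurable (lborel \<Otimes>\<^sub>M P)"
      unfolding g_def by measurable
  qed
  also have "\<dots> = (\<integral>\<^sup>+t. \<integral>\<^sup>+s. ennreal (wp a t) * ennreal (wp a s) * Q2 TYPE('a) i j t s \<partial>lborel \<partial>lborel)"
  proof (intro nn_integral_cong)
    fix t s
    have "(\<integral>\<^sup>+x. g i x t * g j x s \<partial>P) =
        (\<integral>\<^sup>+x. (ennreal (wp a t) * ennreal (wp a s)) * (indicator {..<ong_nn_dist x i} t * indicator {..<ong_nn_dist x j} s) \<partial>P)"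
      using a by (intro nn_integral_cong) (simp add: g_def indicator_def ennreal_mult wp_nonneg)
    also have "\<dots> = (ennreal (wp a t) * ennreal (wp a s)) * (\<integral>\<^sup>+x. indicator {..<ong_nn_dist x i} t * indicator {..<ong_nn_dist x j} s \<partial>P)"
    proof (rule nn_integral_cmult)
      have "(\<lambda>x. (if t < ong_nn_dist x i then 1 else 0) * (if s < ong_nn_dist x j then 1 else 0) :: ennreal) \<in> borel_measurable P"
        by measurable
      then show "(\<lambda>x. indicator {..<ong_nn_dist x i} t * indicator {..<ong_nn_dist x j} s :: ennreal) \<in> borel_measurable P"
        by (rule measurable_cong[THEN iffD1, rotated]) (auto simp: indicator_def)
    qed
    also have "\<dots> = ennreal (wp a t) * ennreal (wp a s) * Q2 TYPE('a) i j t s"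
      unfolding P_def by (simp add: two_point_prob[OF i ij])
    finally show "(\<integral>\<^sup>+x. g i x t * g j x s \<partial>P) = ennreal (wp a t) * ennreal (wp a s) * Q2 TYPE('a) i j t s" .
  qed
  finally show ?thesis unfolding P_def .
qed

lemma one_minus_pow_le_exp:
  fixes x :: real assumes "0 \<le> x" "x \<le> 1"
  shows "(1 - x) ^ n \<le> exp (- (n * x))"
proof -
  have "(1 - x) ^ n \<le> exp (- x) ^ n"
    using assms by (intro power_mono) (use exp_ge_add_one_self[of "-x"] in auto)
  also have "\<dots> = exp (- (n * x))" by (simp add: exp_of_nat_mult[symmetric])
  finally show ?thesis .
qed

lemma key_pointwise:
  fixes a b u t s :: real and d i j :: nat
  assumes a: "0 \<le> a" "a \<le> 1" and b: "0 \<le> b" "b \<le> 1" and u: "a \<le> u" "b \<le> u" "u \<le> 1"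
    and ij: "1 \<le> i" "i < j" and d: "d > 0" and ts: "0 \<le> t" "0 \<le> s"
    and disj: "D \<Longrightarrow> u = a + b"
    and ga: "min (t / d) 1 ^ d \<le> a" and gb: "min (s / d) 1 ^ d \<le> b"
    and c: "0 \<le> c" "c \<le> 1"
  shows "c * (1 - u) ^ i * (1 - b) ^ (j - Suc i) \<le>
           (1 - a) ^ i * (1 - b) ^ (j - 1) +
           (if D then 0 else 1) * exp (- (i * (t / d) ^ d) / 2) * exp (- ((j - 1) * (s / d) ^ d) / 2)"
proof -
  have R0: "0 \<le> (1 - a) ^ i * (1 - b) ^ (j - 1) +
           (if D then 0 else 1) * exp (- (i * (t / d) ^ d) / 2) * exp (- ((j - 1) * (s / d) ^ d) / 2)"
    using a b by auto
  have L1: "c * (1 - u) ^ i * (1 - b) ^ (j - Suc i) \<le> (1 - u) ^ i * (1 - b) ^ (j - Suc i)"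
    using c u b by (intro mult_right_mono) (auto intro!: mult_left_le_one_le)
  show ?thesis
  proof (cases "t \<ge> d \<or> s \<ge> d")
    case True
    then have "a = 1 \<or> b = 1"
    proof
      assume "t \<ge> d" then have "min (t / d) 1 = 1" using d by (auto simp: min_def field_simps)
      then show ?thesis using ga a by auto
    next
      assume "s \<ge> d" then have "min (s / d) 1 = 1" using d by (auto simp: min_def field_simps)
      then show ?thesis using gb b by auto
    qed
    then have "u = 1" using u by auto
    then have "(1 - u) ^ i = 0" using ij by simp
    then have z: "c * (1 - u) ^ i * (1 - b) ^ (j - Suc i) = 0" by simp
    show ?thesis by (subst z) (rule R0)
  next
    case False
    then have ta: "(t / d) ^ d \<le> a" and sb: "(s / d) ^ d \<le> b"
      using ga gb d by (auto simp: min_def field_simps split: if_splits)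
    show ?thesis
    proof (cases D)
      case True
      then have u': "u = a + b" by (rule disj)
      have "(1 - u) ^ i \<le> ((1 - a) * (1 - b)) ^ i"
        using u a b u' by (intro power_mono) (auto simp: algebra_simps intro: mult_nonneg_nonneg)
      then have "(1 - u) ^ i * (1 - b) ^ (j - Suc i) \<le> ((1 - a) * (1 - b)) ^ i * (1 - b) ^ (j - Suc i)"
        using b by (intro mult_right_mono) auto
      also have "\<dots> = (1 - a) ^ i * (1 - b) ^ (j - 1)"
        using ij by (simp add: power_mult_distrib mult.assoc power_add[symmetric])
      finally show ?thesis using L1 True by simp
    next
      case False
      have e1: "(1 - u) ^ i \<le> exp (- (i * u))" using u a by (intro one_minus_pow_le_exp) auto
      have e2: "(1 - b) ^ (j - Suc i) \<le> exp (- ((j - Suc i) * b))" using b by (intro one_minus_pow_le_exp) auto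
      have "(1 - u) ^ i * (1 - b) ^ (j - Suc i) \<le> exp (- (i * u)) * exp (- ((j - Suc i) * b))"
        using e1 e2 u b by (intro mult_mono) auto
      also have "\<dots> = exp (- (i * u) - (j - Suc i) * b)" by (simp add: exp_add[symmetric])
      also have "\<dots> \<le> exp (- (i * (t / d) ^ d) / 2 - ((j - 1) * (s / d) ^ d) / 2)"
      proof -
        have "real i * a \<le> real i * u" "real i * b \<le> real i * u" using u by (auto intro: mult_left_mono)
        then have "real i * u \<ge> real i * a / 2 + real i * b / 2" by linarith
        moreover have "real (j - 1) * b = real i * b + real (j - Suc i) * b"
        proof -
          have "real (j - 1) = real i + real (j - Suc i)" using ij by auto
          then show ?thesis by (simp add: algebra_simps)
        qed
        moreover have "real i * a \<ge> i * (t / d) ^ d" using ta by (intro mult_left_mono) auto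
        moreover have "real (j - 1) * b \<ge> (j - 1) * (s / d) ^ d" using sb by (intro mult_left_mono) auto
        moreover have "real (j - Suc i) * b \<ge> 0" using b by auto
        ultimately show ?thesis by (simp only: exp_le_cancel_iff)
      qed
      also have "\<dots> = exp (- (i * (t / d) ^ d) / 2) * exp (- ((j - 1) * (s / d) ^ d) / 2)"
        by (simp add: exp_add[symmetric])
      finally show ?thesis using L1 False a b by (auto intro: add_increasing)
    qed
  qed
qed

lemma Q2_pointwise:
  fixes y z :: "'a::euclidean_space"
  assumes y: "y \<in> cbox 0 One" and z: "z \<in> cbox 0 One" and ij: "1 \<le> i" "i < j"
    and ts: "0 \<le> t" "0 \<le> s"
  shows "indicator {w. s < dist z w} y * (ennreal (1 - measure UC (cball y t \<union> cball z s))) ^ i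
           * (ennreal (1 - capv z s)) ^ (j - Suc i) \<le>
         ennreal ((1 - capv y t) ^ i * (1 - capv z s) ^ (j - 1) +
           (if t + s < dist y z then 0 else 1) * (exp (- (i * (t / DIM('a)) ^ DIM('a)) / 2) *
              exp (- (real (j - 1) * (s / DIM('a)) ^ DIM('a)) / 2)))"
proof -
  interpret UCp: prob_space "UC :: 'a measure" by (rule prob_space_UC)
  define u where "u = measure UC (cball y t \<union> cball z s)"
  define a where "a = capv y t"
  define b where "b = capv z s"
  define c :: real where "c = indicator {w. s < dist z w} y"
  have a01: "0 \<le> a" "a \<le> 1" using capv_nonneg capv_le1 by (auto simp: a_def)
  have b01: "0 \<le> b" "b \<le> 1" using capv_nonneg capv_le1 by (auto simp: b_def)
  have au: "a \<le> u" unfolding a_def u_def capv_def by (intro UCp.finite_measure_mono) auto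
  have bu: "b \<le> u" unfolding b_def u_def capv_def by (intro UCp.finite_measure_mono) auto
  have u1: "u \<le> 1" unfolding u_def by (rule UCp.prob_le_1)
  have disj: "u = a + b" if "t + s < dist y z"
  proof -
    have "cball y t \<inter> cball z s = {}"
      using that dist_triangle[of y z] by (auto simp: dist_commute) (smt (verit) dist_triangle2)
    then show ?thesis unfolding u_def a_def b_def capv_def
      by (intro UCp.finite_measure_Union) auto
  qed
  have key: "c * (1 - u) ^ i * (1 - b) ^ (j - Suc i) \<le>
           (1 - a) ^ i * (1 - b) ^ (j - 1) +
           (if t + s < dist y z then 0 else 1) * exp (- (i * (t / DIM('a)) ^ DIM('a)) / 2) *
              exp (- (real (j - 1) * (s / DIM('a)) ^ DIM('a)) / 2)"
    by (rule key_pointwise[OF a01 b01 au bu u1 ij _ ts disj])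
       (auto simp: a_def b_def c_def intro!: capv_lower y z ts)
  have "indicator {w. s < dist z w} y * (ennreal (1 - u)) ^ i * (ennreal (1 - b)) ^ (j - Suc i)
      = ennreal (c * (1 - u) ^ i * (1 - b) ^ (j - Suc i))"
    using u1 b01 by (simp add: c_def ennreal_mult ennreal_power indicator_def)
  also have "\<dots> \<le> ennreal ((1 - a) ^ i * (1 - b) ^ (j - 1) +
           (if t + s < dist y z then 0 else 1) * exp (- (i * (t / DIM('a)) ^ DIM('a)) / 2) *
              exp (- (real (j - 1) * (s / DIM('a)) ^ DIM('a)) / 2))"
    by (rule ennreal_leI[OF key])
  finally show ?thesis by (simp only: u_def a_def b_def mult.assoc)
qed

lemma capv_pow_nonneg[simp]: "0 \<le> (1 - capv x r) ^ n"
  using capv_le1[of x r] by simp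

lemma AE_UC_cbox: "AE x in (UC::'a::euclidean_space measure). x \<in> cbox 0 One"
  using AE_UC by eventually_elim (use box_subset_cbox in auto)

lemma Q2_bound:
  assumes ij: "1 \<le> i" "i < j" and ts: "0 \<le> t" "0 \<le> s"
  shows "Q2 TYPE('a::euclidean_space) i j t s \<le>
    (\<integral>\<^sup>+y. ennreal ((1 - capv (y::'a) t) ^ i) \<partial>UC) * (\<integral>\<^sup>+z. ennreal ((1 - capv (z::'a) s) ^ (j - 1)) \<partial>UC)
    + ennreal (exp (- (i * (t / DIM('a)) ^ DIM('a)) / 2) * exp (- (real (j - 1) * (s / DIM('a)) ^ DIM('a)) / 2)
         * (unit_ball_vol DIM('a) * (t + s) ^ DIM('a)))"
proof -
  interpret UCp: prob_space "UC :: 'a measure" by (rule prob_space_UC)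
  define E where "E = exp (- (i * (t / DIM('a)) ^ DIM('a)) / 2) * exp (- (real (j - 1) * (s / DIM('a)) ^ DIM('a)) / 2)"
  have E0: "0 \<le> E" by (simp add: E_def)
  have "Q2 TYPE('a) i j t s \<le> (\<integral>\<^sup>+z. \<integral>\<^sup>+y. ennreal ((1 - capv (y::'a) t) ^ i * (1 - capv (z::'a) s) ^ (j - 1) +
           (if t + s < dist y z then 0 else 1) * E) \<partial>UC \<partial>UC)"
    unfolding Q2_def E_def
  proof (intro nn_integral_mono_AE)
    show "AE z in (UC::'a measure). (\<integral>\<^sup>+y. indicator {w. s < dist z w} (y::'a) * (ennreal (1 - measure UC (cball y t \<union> cball z s))) ^ i
           * (ennreal (1 - capv (z::'a) s)) ^ (j - Suc i) \<partial>UC) \<le> (\<integral>\<^sup>+y. ennreal ((1 - capv (y::'a) t) ^ i * (1 - capv (z::'a) s) ^ (j - 1) +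
           (if t + s < dist y z then 0 else 1) * (exp (- (i * (t / DIM('a)) ^ DIM('a)) / 2) *
              exp (- (real (j - 1) * (s / DIM('a)) ^ DIM('a)) / 2))) \<partial>UC)"
      using AE_UC_cbox
    proof eventually_elim
      case (elim z)
      show ?case
        by (rule nn_integral_mono_AE, use AE_UC_cbox in eventually_elim)
           (rule Q2_pointwise, use elim ij ts in auto)
    qed
  qed
  also have "\<dots> = (\<integral>\<^sup>+z. (\<integral>\<^sup>+y. ennreal ((1 - capv (y::'a) t) ^ i) * ennreal ((1 - capv (z::'a) s) ^ (j - 1)) \<partial>UC) +
           (\<integral>\<^sup>+y. ennreal E * indicator (cball z (t + s)) y \<partial>UC) \<partial>UC)"
  proof (intro nn_integral_cong)
    fix z :: 'a
    have "(\<integral>\<^sup>+y. ennreal ((1 - capv (y::'a) t) ^ i * (1 - capv (z::'a) s) ^ (j - 1) +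
           (if t + s < dist y z then 0 else 1) * E) \<partial>UC) =
          (\<integral>\<^sup>+y. ennreal ((1 - capv (y::'a) t) ^ i) * ennreal ((1 - capv (z::'a) s) ^ (j - 1)) +
           ennreal E * indicator (cball z (t + s)) y \<partial>UC)"
      using E0 by (intro nn_integral_cong)
        (auto simp: ennreal_plus ennreal_mult indicator_def dist_commute not_less)
    also have "\<dots> = (\<integral>\<^sup>+y. ennreal ((1 - capv (y::'a) t) ^ i) * ennreal ((1 - capv (z::'a) s) ^ (j - 1)) \<partial>UC) +
           (\<integral>\<^sup>+y. ennreal E * indicator (cball z (t + s)) y \<partial>UC)"
    proof (rule nn_integral_add)
      have [measurable]: "cball z (t + s) \<in> sets UC" by simp
      show "(\<lambda>y. ennreal E * indicator (cball z (t + s)) y) \<in> borel_measurable UC" by measurable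
    qed auto
    finally show "(\<integral>\<^sup>+y. ennreal ((1 - capv (y::'a) t) ^ i * (1 - capv (z::'a) s) ^ (j - 1) +
           (if t + s < dist y z then 0 else 1) * E) \<partial>UC) =
          (\<integral>\<^sup>+y. ennreal ((1 - capv (y::'a) t) ^ i) * ennreal ((1 - capv (z::'a) s) ^ (j - 1)) \<partial>UC) +
           (\<integral>\<^sup>+y. ennreal E * indicator (cball z (t + s)) y \<partial>UC)" .
  qed
  also have "\<dots> = (\<integral>\<^sup>+z. (\<integral>\<^sup>+y. ennreal ((1 - capv (y::'a) t) ^ i) \<partial>UC) * ennreal ((1 - capv (z::'a) s) ^ (j - 1)) +
           ennreal E * ennreal (capv (z::'a) (t + s)) \<partial>UC)"
  proof (intro nn_integral_cong arg_cong2[where f="(+)"])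
    fix z :: 'a
    show "(\<integral>\<^sup>+y. ennreal ((1 - capv (y::'a) t) ^ i) * ennreal ((1 - capv (z::'a) s) ^ (j - 1)) \<partial>UC) =
       (\<integral>\<^sup>+y. ennreal ((1 - capv (y::'a) t) ^ i) \<partial>UC) * ennreal ((1 - capv (z::'a) s) ^ (j - 1))"
      by (rule nn_integral_multc) auto
    show "(\<integral>\<^sup>+y. ennreal E * indicator (cball z (t + s)) y \<partial>UC) = ennreal E * ennreal (capv (z::'a) (t + s))"
      by (subst nn_integral_cmult_indicator) (auto simp: capv_def UCp.emeasure_eq_measure)
  qed
  also have "\<dots> = (\<integral>\<^sup>+y. ennreal ((1 - capv (y::'a) t) ^ i) \<partial>UC) * (\<integral>\<^sup>+z. ennreal ((1 - capv (z::'a) s) ^ (j - 1)) \<partial>UC)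
       + (\<integral>\<^sup>+z. ennreal E * ennreal (capv (z::'a) (t + s)) \<partial>UC)"
    by (subst nn_integral_add) (auto simp: nn_integral_cmult)
  also have "\<dots> \<le> (\<integral>\<^sup>+y. ennreal ((1 - capv (y::'a) t) ^ i) \<partial>UC) * (\<integral>\<^sup>+z. ennreal ((1 - capv (z::'a) s) ^ (j - 1)) \<partial>UC)
       + (\<integral>\<^sup>+z. ennreal (E * (unit_ball_vol DIM('a) * (t + s) ^ DIM('a))) \<partial>(UC::'a measure))"
  proof (rule add_left_mono, rule nn_integral_mono)
    fix z :: 'a
    have "E * capv z (t + s) \<le> E * (unit_ball_vol DIM('a) * (t + s) ^ DIM('a))"
      using ts E0 by (intro mult_left_mono capv_upper) auto
    then show "ennreal E * ennreal (capv z (t + s)) \<le> ennreal (E * (unit_ball_vol DIM('a) * (t + s) ^ DIM('a)))"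
      using E0 capv_nonneg[of z "t + s"] by (subst ennreal_mult[symmetric]) (auto intro: ennreal_leI)
  qed
  also have "(\<integral>\<^sup>+z. ennreal (E * (unit_ball_vol DIM('a) * (t + s) ^ DIM('a))) \<partial>(UC::'a measure)) =
     ennreal (E * (unit_ball_vol DIM('a) * (t + s) ^ DIM('a)))"
  proof -
    have "emeasure UC (UNIV::'a set) = 1" using UCp.emeasure_space_1 by simp
    then show ?thesis by simp
  qed
  finally show ?thesis unfolding E_def by simp
qed

definition Gc :: "real \<Rightarrow> nat \<Rightarrow> nat \<Rightarrow> real \<Rightarrow> real" where
  "Gc a d p lam = a * Gamma ((a + p) / d) / (d * lam powr ((a + p) / d))"

lemma Gc_nonneg: "a > 0 \<Longrightarrow> d > 0 \<Longrightarrow> lam > 0 \<Longrightarrow> 0 \<le> Gc a d p lam"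
  unfolding Gc_def by (intro divide_nonneg_pos mult_nonneg_nonneg Gamma_real_nonneg) auto

lemma wp_gamma:
  assumes a: "a > 0" and lam: "lam > 0" and d: "d > 0"
  shows "(\<integral>\<^sup>+t. ennreal (wp a t * t ^ p * exp (- lam * t ^ d)) \<partial>lborel) = ennreal (Gc a d p lam)"
proof -
  have "(\<integral>\<^sup>+t. ennreal (wp a t * t ^ p * exp (- lam * t ^ d)) \<partial>lborel) =
        (\<integral>\<^sup>+t. ennreal a * ennreal (indicator {0<..} t * (t powr (a + p - 1) * exp (- lam * t ^ d))) \<partial>lborel)"
  proof (intro nn_integral_cong)
    fix t :: real
    show "ennreal (wp a t * t ^ p * exp (- lam * t ^ d)) =
        ennreal a * ennreal (indicator {0<..} t * (t powr (a + p - 1) * exp (- lam * t ^ d)))"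
    proof (cases "t > 0")
      case True
      have "t powr (a - 1) * t ^ p = t powr (a + p - 1)"
        using True by (simp add: powr_realpow[symmetric] powr_add[symmetric] algebra_simps)
      then have "wp a t * t ^ p * exp (- lam * t ^ d) = a * (indicator {0<..} t * (t powr (a + p - 1) * exp (- lam * t ^ d)))"
        using True by (simp add: wp_def algebra_simps)
      then show ?thesis using a True by (simp add: ennreal_mult mult.assoc)
    qed (simp add: wp_def)
  qed
  also have "\<dots> = ennreal a * (\<integral>\<^sup>+t. ennreal (indicator {0<..} t * (t powr (a + p - 1) * exp (- lam * t ^ d))) \<partial>lborel)"
    by (rule nn_integral_cmult) measurable
  also have "\<dots> = ennreal a * ennreal (Gamma ((a + p) / d) / (d * lam powr ((a + p) / d)))"
    using a by (subst gamma_power_nn_integral[OF _ lam d]) auto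
  also have "\<dots> = ennreal (Gc a d p lam)"
  proof -
    have "0 \<le> Gamma ((a + p) / d) / (d * lam powr ((a + p) / d))"
      using a d lam by (intro divide_nonneg_pos Gamma_real_nonneg) auto
    then show ?thesis using a by (simp add: Gc_def ennreal_mult[symmetric])
  qed
  finally show ?thesis .
qed

lemma pow_capv_bound:
  assumes y: "y \<in> cbox 0 One" and t: "t \<ge> 0"
  shows "(1 - capv (y::'a::euclidean_space) t) ^ n \<le> exp (- (n * (t / DIM('a)) ^ DIM('a)))"
proof (cases "t \<ge> DIM('a)")
  case True
  then have "min (t / DIM('a)) 1 = 1" by (auto simp: min_def field_simps)
  then have "capv y t = 1" using capv_lower[OF y t] capv_le1[of y t] by auto
  then show ?thesis by (cases n) auto
next
  case False
  then have "(t / DIM('a)) ^ DIM('a) \<le> capv y t" using capv_lower[OF y t] by (auto simp: min_def field_simps)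
  then have "exp (- (n * capv y t)) \<le> exp (- (n * (t / DIM('a)) ^ DIM('a)))"
    by (auto intro: mult_left_mono)
  moreover have "(1 - capv y t) ^ n \<le> exp (- (n * capv y t))"
    by (rule one_minus_pow_le_exp) (auto simp: capv_nonneg capv_le1)
  ultimately show ?thesis by linarith
qed

lemma inner_measurable[measurable]:
  "(\<lambda>t. \<integral>\<^sup>+y. ennreal ((1 - capv (y::'a::euclidean_space) t) ^ n) \<partial>UC) \<in> borel_measurable borel"
proof -
  interpret UCp: prob_space "UC :: 'a measure" by (rule prob_space_UC)
  have "(\<lambda>(t, y). ennreal ((1 - capv (y::'a) t) ^ n)) \<in> borel_measurable (borel \<Otimes>\<^sub>M UC)"
    by measurable
  then show ?thesis by (rule UCp.borel_measurable_nn_integral)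
qed

lemma Mi_bound:
  assumes a: "a > 0" and n: "n \<ge> 1"
  shows "Mi TYPE('a::euclidean_space) a n \<le> ennreal (Gc a DIM('a) 0 (n / DIM('a) ^ DIM('a)))"
proof -
  interpret UCp: prob_space "UC :: 'a measure" by (rule prob_space_UC)
  have "Mi TYPE('a) a n \<le> (\<integral>\<^sup>+t. ennreal (wp a t * t ^ 0 * exp (- (n / DIM('a) ^ DIM('a)) * t ^ DIM('a))) \<partial>lborel)"
    unfolding Mi_def
  proof (rule nn_integral_mono)
    fix t :: real
    show "ennreal (wp a t) * (\<integral>\<^sup>+y. ennreal ((1 - capv (y::'a) t) ^ n) \<partial>UC) \<le>
        ennreal (wp a t * t ^ 0 * exp (- (n / DIM('a) ^ DIM('a)) * t ^ DIM('a)))"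
    proof (cases "t > 0")
      case True
      have "(\<integral>\<^sup>+y. ennreal ((1 - capv (y::'a) t) ^ n) \<partial>UC) \<le> (\<integral>\<^sup>+y. ennreal (exp (- (n * (t / DIM('a)) ^ DIM('a)))) \<partial>(UC::'a measure))"
        by (rule nn_integral_mono_AE, use AE_UC_cbox in eventually_elim)
           (use True in \<open>auto intro!: ennreal_leI pow_capv_bound\<close>)
      also have "\<dots> = ennreal (exp (- (n * (t / DIM('a)) ^ DIM('a))))"
      proof -
        have "emeasure UC (UNIV::'a set) = 1" using UCp.emeasure_space_1 by simp
        then show ?thesis by simp
      qed
      also have "exp (- (n * (t / DIM('a)) ^ DIM('a))) = exp (- (n / DIM('a) ^ DIM('a)) * t ^ DIM('a))"
        by (simp add: power_divide)
      finally have "ennreal (wp a t) * (\<integral>\<^sup>+y. ennreal ((1 - capv (y::'a) t) ^ n) \<partial>UC) \<le>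
          ennreal (wp a t) * ennreal (exp (- (n / DIM('a) ^ DIM('a)) * t ^ DIM('a)))"
        by (rule mult_left_mono) simp
      then show ?thesis using a by (simp add: ennreal_mult wp_nonneg)
    qed (simp add: wp_def)
  qed
  also have "\<dots> = ennreal (Gc a DIM('a) 0 (n / DIM('a) ^ DIM('a)))"
    using n by (intro wp_gamma a) auto
  finally show ?thesis .
qed

lemma nn_integral_sep:
  fixes f g :: "real \<Rightarrow> ennreal"
  assumes [measurable]: "f \<in> borel_measurable borel" "g \<in> borel_measurable borel"
  shows "(\<integral>\<^sup>+t. \<integral>\<^sup>+s. f t * g s \<partial>lborel \<partial>lborel) = (\<integral>\<^sup>+t. f t \<partial>lborel) * (\<integral>\<^sup>+s. g s \<partial>lborel)"
proof -
  have "(\<integral>\<^sup>+t. \<integral>\<^sup>+s. f t * g s \<partial>lborel \<partial>lborel) = (\<integral>\<^sup>+t. f t * (\<integral>\<^sup>+s. g s \<partial>lborel) \<partial>lborel)"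
    by (intro nn_integral_cong nn_integral_cmult) simp
  also have "\<dots> = (\<integral>\<^sup>+t. f t \<partial>lborel) * (\<integral>\<^sup>+s. g s \<partial>lborel)"
    by (rule nn_integral_multc) simp
  finally show ?thesis .
qed

lemma sum_pow_le: "0 \<le> t \<Longrightarrow> 0 \<le> s \<Longrightarrow> (t + s) ^ n \<le> 2 ^ n * (t ^ n + s ^ n)" for t s :: real
proof -
  assume ts: "0 \<le> t" "0 \<le> s"
  have "(t + s) ^ n \<le> (2 * max t s) ^ n" using ts by (intro power_mono) auto
  also have "\<dots> = 2 ^ n * max t s ^ n" by (simp add: power_mult_distrib)
  also have "max t s ^ n \<le> t ^ n + s ^ n" using ts by (auto simp: max_def)
  then have "2 ^ n * max t s ^ n \<le> 2 ^ n * (t ^ n + s ^ n)" by simp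
  finally show ?thesis .
qed

lemma two_point_bound:
  assumes ij: "1 \<le> i" "i < j" and a: "a > 0"
  defines "D \<equiv> DIM('a::euclidean_space)"
  defines "l1 \<equiv> i / (2 * D ^ D)" and "l2 \<equiv> (j - 1) / (2 * D ^ D)"
  shows "(\<integral>\<^sup>+t. \<integral>\<^sup>+s. ennreal (wp a t) * ennreal (wp a s) * Q2 TYPE('a) i j t s \<partial>lborel \<partial>lborel)
    \<le> Mi TYPE('a) a i * Mi TYPE('a) a (j - 1) +
      ennreal (unit_ball_vol D * 2 ^ D * (Gc a D D l1 * Gc a D 0 l2 + Gc a D 0 l1 * Gc a D D l2))"
proof -
  have D: "D > 0" by (simp add: D_def)
  have l1: "l1 > 0" and l2: "l2 > 0" using ij D by (auto simp: l1_def l2_def)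
  define A where "A = (\<lambda>n t. \<integral>\<^sup>+y. ennreal ((1 - capv (y::'a) t) ^ n) \<partial>UC)"
  have Am[measurable]: "A n \<in> borel_measurable borel" for n unfolding A_def by measurable
  define R where "R = (\<lambda>t s. wp a t * wp a s * (exp (- (i * (t / D) ^ D) / 2) * exp (- (real (j - 1) * (s / D) ^ D) / 2)
         * (unit_ball_vol D * (t + s) ^ D)))"
  define F where "F = (\<lambda>p t. wp a t * t ^ p * exp (- l1 * t ^ D))"
  define G where "G = (\<lambda>p t. wp a t * t ^ p * exp (- l2 * t ^ D))"
  have Fm[measurable]: "F p \<in> borel_measurable borel" for p unfolding F_def by measurable
  have Gm[measurable]: "G p \<in> borel_measurable borel" for p unfolding G_def by measurable
  have F0: "0 \<le> F p t" for p t unfolding F_def using a by (cases "t > 0") (auto simp: wp_def)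
  have G0: "0 \<le> G p t" for p t unfolding G_def using a by (cases "t > 0") (auto simp: wp_def)
  have "(\<integral>\<^sup>+t. \<integral>\<^sup>+s. ennreal (wp a t) * ennreal (wp a s) * Q2 TYPE('a) i j t s \<partial>lborel \<partial>lborel)
      \<le> (\<integral>\<^sup>+t. \<integral>\<^sup>+s. (ennreal (wp a t) * A i t) * (ennreal (wp a s) * A (j - 1) s) + ennreal (R t s) \<partial>lborel \<partial>lborel)"
  proof (intro nn_integral_mono)
    fix t s :: real
    show "ennreal (wp a t) * ennreal (wp a s) * Q2 TYPE('a) i j t s \<le>
        (ennreal (wp a t) * A i t) * (ennreal (wp a s) * A (j - 1) s) + ennreal (R t s)"
    proof (cases "t > 0 \<and> s > 0")
      case True
      have "ennreal (wp a t) * ennreal (wp a s) * Q2 TYPE('a) i j t s \<le>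
          ennreal (wp a t) * ennreal (wp a s) * (A i t * A (j - 1) s +
          ennreal (exp (- (i * (t / D) ^ D) / 2) * exp (- (real (j - 1) * (s / D) ^ D) / 2)
           * (unit_ball_vol D * (t + s) ^ D)))"
        unfolding A_def D_def by (intro mult_left_mono Q2_bound ij) (use True in auto)
      also have "\<dots> = (ennreal (wp a t) * A i t) * (ennreal (wp a s) * A (j - 1) s) + ennreal (R t s)"
        using a True by (simp add: R_def distrib_left ennreal_mult wp_nonneg mult_ac)
      finally show ?thesis .
    qed (auto simp: wp_def)
  qed
  also have "\<dots> = (\<integral>\<^sup>+t. \<integral>\<^sup>+s. (ennreal (wp a t) * A i t) * (ennreal (wp a s) * A (j - 1) s) \<partial>lborel \<partial>lborel)
      + (\<integral>\<^sup>+t. \<integral>\<^sup>+s. ennreal (R t s) \<partial>lborel \<partial>lborel)"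
  proof -
    have "(\<integral>\<^sup>+t. \<integral>\<^sup>+s. (ennreal (wp a t) * A i t) * (ennreal (wp a s) * A (j - 1) s) + ennreal (R t s) \<partial>lborel \<partial>lborel)
       = (\<integral>\<^sup>+t. (\<integral>\<^sup>+s. (ennreal (wp a t) * A i t) * (ennreal (wp a s) * A (j - 1) s) \<partial>lborel) + (\<integral>\<^sup>+s. ennreal (R t s) \<partial>lborel) \<partial>lborel)"
      by (intro nn_integral_cong nn_integral_add) (auto simp: R_def)
    also have "\<dots> = (\<integral>\<^sup>+t. \<integral>\<^sup>+s. (ennreal (wp a t) * A i t) * (ennreal (wp a s) * A (j - 1) s) \<partial>lborel \<partial>lborel)
      + (\<integral>\<^sup>+t. \<integral>\<^sup>+s. ennreal (R t s) \<partial>lborel \<partial>lborel)"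
      by (rule nn_integral_add) (auto simp: R_def)
    finally show ?thesis .
  qed
  also have "(\<integral>\<^sup>+t. \<integral>\<^sup>+s. (ennreal (wp a t) * A i t) * (ennreal (wp a s) * A (j - 1) s) \<partial>lborel \<partial>lborel)
      = Mi TYPE('a) a i * Mi TYPE('a) a (j - 1)"
    by (subst nn_integral_sep) (auto simp: Mi_def A_def D_def)
  also have "(\<integral>\<^sup>+t. \<integral>\<^sup>+s. ennreal (R t s) \<partial>lborel \<partial>lborel) \<le>
      (\<integral>\<^sup>+t. \<integral>\<^sup>+s. ennreal (unit_ball_vol D * 2 ^ D) * (ennreal (F D t) * ennreal (G 0 s) + ennreal (F 0 t) * ennreal (G D s)) \<partial>lborel \<partial>lborel)"
  proof (intro nn_integral_mono)
    fix t s :: real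
    show "ennreal (R t s) \<le> ennreal (unit_ball_vol D * 2 ^ D) * (ennreal (F D t) * ennreal (G 0 s) + ennreal (F 0 t) * ennreal (G D s))"
    proof (cases "t > 0 \<and> s > 0")
      case True
      have e1: "exp (- (i * (t / D) ^ D) / 2) = exp (- l1 * t ^ D)"
        using D by (simp add: l1_def power_divide)
      have e2: "exp (- (real (j - 1) * (s / D) ^ D) / 2) = exp (- l2 * s ^ D)"
        using D ij by (simp add: l2_def power_divide of_nat_diff)
      have "R t s = (wp a t * exp (- l1 * t ^ D)) * (wp a s * exp (- l2 * s ^ D)) * unit_ball_vol D * (t + s) ^ D"
        unfolding R_def e1 e2 by (simp add: mult_ac)
      also have "\<dots> \<le> (wp a t * exp (- l1 * t ^ D)) * (wp a s * exp (- l2 * s ^ D)) * unit_ball_vol D * (2 ^ D * (t ^ D + s ^ D))"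
        using True a by (intro mult_left_mono sum_pow_le) (auto intro!: mult_nonneg_nonneg wp_nonneg)
      also have "\<dots> = unit_ball_vol D * 2 ^ D * (F D t * G 0 s + F 0 t * G D s)"
        by (simp add: F_def G_def algebra_simps)
      finally have "R t s \<le> unit_ball_vol D * 2 ^ D * (F D t * G 0 s + F 0 t * G D s)" .
      then have "ennreal (R t s) \<le> ennreal (unit_ball_vol D * 2 ^ D * (F D t * G 0 s + F 0 t * G D s))"
        by (rule ennreal_leI)
      also have "\<dots> = ennreal (unit_ball_vol D * 2 ^ D) * (ennreal (F D t) * ennreal (G 0 s) + ennreal (F 0 t) * ennreal (G D s))"
        using F0 G0 by (simp add: ennreal_mult ennreal_plus)
      finally show ?thesis .
    qed (auto simp: R_def wp_def)
  qed
  also have "\<dots> = ennreal (unit_ball_vol D * 2 ^ D) * ((\<integral>\<^sup>+t. \<integral>\<^sup>+s. ennreal (F D t) * ennreal (G 0 s) \<partial>lborel \<partial>lborel)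
       + (\<integral>\<^sup>+t. \<integral>\<^sup>+s. ennreal (F 0 t) * ennreal (G D s) \<partial>lborel \<partial>lborel))"
  proof -
    have "(\<integral>\<^sup>+t. \<integral>\<^sup>+s. ennreal (unit_ball_vol D * 2 ^ D) * (ennreal (F D t) * ennreal (G 0 s) + ennreal (F 0 t) * ennreal (G D s)) \<partial>lborel \<partial>lborel)
       = (\<integral>\<^sup>+t. ennreal (unit_ball_vol D * 2 ^ D) * ((\<integral>\<^sup>+s. ennreal (F D t) * ennreal (G 0 s) \<partial>lborel) + (\<integral>\<^sup>+s. ennreal (F 0 t) * ennreal (G D s) \<partial>lborel)) \<partial>lborel)"
      by (intro nn_integral_cong, subst nn_integral_cmult, simp, subst nn_integral_add) auto
    also have "\<dots> = ennreal (unit_ball_vol D * 2 ^ D) * ((\<integral>\<^sup>+t. (\<integral>\<^sup>+s. ennreal (F D t) * ennreal (G 0 s) \<partial>lborel) \<partial>lborel) + (\<integral>\<^sup>+t. (\<integral>\<^sup>+s. ennreal (F 0 t) * ennreal (G D s) \<partial>lborel) \<partial>lborel))"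
      by (subst nn_integral_cmult, simp, subst nn_integral_add) auto
    finally show ?thesis .
  qed
  also have "\<dots> = ennreal (unit_ball_vol D * 2 ^ D * (Gc a D D l1 * Gc a D 0 l2 + Gc a D 0 l1 * Gc a D D l2))"
  proof -
    have "(\<integral>\<^sup>+t. ennreal (F p t) \<partial>lborel) = ennreal (Gc a D p l1)" for p
      unfolding F_def by (rule wp_gamma[OF a l1 D])
    moreover have "(\<integral>\<^sup>+t. ennreal (G p t) \<partial>lborel) = ennreal (Gc a D p l2)" for p
      unfolding G_def by (rule wp_gamma[OF a l2 D])
    ultimately show ?thesis
      using Gc_nonneg[OF a D l1] Gc_nonneg[OF a D l2]
      by (simp add: nn_integral_sep ennreal_mult ennreal_plus)
  qed
  finally show ?thesis by (simp add: add_mono)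
qed

lemma cn_pow: "n \<ge> 1 \<Longrightarrow> (real n powr (- 1 / real d)) ^ d = 1 / real n" if "d > 0"
proof -
  assume n: "n \<ge> 1"
  have "(real n powr (- 1 / real d)) ^ d = real n powr (- 1 / real d * d)"
    using n by (simp add: powr_realpow[symmetric] powr_powr)
  also have "\<dots> = 1 / real n" using that n by (simp add: powr_minus_divide)
  finally show ?thesis .
qed

lemma cn_tendsto: "d > 0 \<Longrightarrow> (\<lambda>n. real n powr (- 1 / real d)) \<longlonglongrightarrow> 0"
  by (intro tendsto_neg_powr filterlim_real_sequentially) auto

lemma Phi_lim:
  assumes s: "s > 0"
  shows "(\<lambda>n. \<integral>y. (1 - capv (y::'a::euclidean_space) (real n powr (- 1 / DIM('a)) * s)) ^ n \<partial>UC)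
           \<longlonglongrightarrow> exp (- (unit_ball_vol DIM('a) * s ^ DIM('a)))"
proof -
  interpret UCp: prob_space "UC :: 'a measure" by (rule prob_space_UC)
  define L where "L = exp (- (unit_ball_vol DIM('a) * s ^ DIM('a)))"
  have "(\<lambda>n. \<integral>y. (1 - capv (y::'a) (real n powr (- 1 / DIM('a)) * s)) ^ n \<partial>UC) \<longlonglongrightarrow> (\<integral>y. L \<partial>(UC::'a measure))"
  proof (rule integral_dominated_convergence[where w="\<lambda>_. 1"])
    show "AE y in UC. (\<lambda>n. (1 - capv (y::'a) (real n powr (- 1 / DIM('a)) * s)) ^ n) \<longlonglongrightarrow> L"
      using AE_UC
    proof eventually_elim
      case (elim y)
      obtain e where e: "e > 0" "cball y e \<subseteq> box 0 One"
        using open_contains_cball[THEN iffD1, OF open_box] elim by blast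
      have "\<forall>\<^sub>F n in sequentially. real n powr (- 1 / DIM('a)) < e / s"
        using cn_tendsto[of "DIM('a)"] e s by (intro order_tendstoD) auto
      moreover have "\<forall>\<^sub>F n in sequentially. n \<ge> (1::nat)" by (rule eventually_ge_at_top)
      ultimately have ev: "\<forall>\<^sub>F n in sequentially. (1 - capv y (real n powr (- 1 / DIM('a)) * s)) ^ n =
            (1 + (- (unit_ball_vol DIM('a) * s ^ DIM('a))) / real n) ^ n"
      proof eventually_elim
        case (elim n)
        have r0: "0 \<le> real n powr (- 1 / DIM('a)) * s" using s by auto
        have "real n powr (- 1 / DIM('a)) * s \<le> e" using elim s by (simp add: field_simps)
        then have "cball y (real n powr (- 1 / DIM('a)) * s) \<subseteq> box 0 One" using e by auto
        then have "capv y (real n powr (- 1 / DIM('a)) * s) = unit_ball_vol DIM('a) * (real n powr (- 1 / DIM('a)) * s) ^ DIM('a)"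
          using r0 by (rule capv_inside)
        also have "\<dots> = unit_ball_vol DIM('a) * s ^ DIM('a) / real n"
        proof -
          have c: "(real n powr (- 1 / DIM('a))) ^ DIM('a) = 1 / real n" using elim by (intro cn_pow) auto
          have "unit_ball_vol DIM('a) * (real n powr (- 1 / DIM('a)) * s) ^ DIM('a) =
                unit_ball_vol DIM('a) * ((real n powr (- 1 / DIM('a))) ^ DIM('a) * s ^ DIM('a))"
            by (simp only: power_mult_distrib)
          also have "\<dots> = unit_ball_vol DIM('a) * ((1 / real n) * s ^ DIM('a))" by (simp only: c)
          finally show ?thesis by simp
        qed
        finally show ?case by (metis diff_conv_add_uminus minus_divide_left)
      qed
      show ?case unfolding L_def
        by (rule Lim_transform_eventually[OF tendsto_exp_limit_sequentially]) (use ev in \<open>simp add: eventually_mono\<close>)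
    qed
    show "\<And>n. AE y in UC. norm ((1 - capv (y::'a) (real n powr (- 1 / DIM('a)) * s)) ^ n) \<le> 1"
    proof (intro AE_I2)
      fix n and y :: 'a
      have "0 \<le> 1 - capv y (real n powr (- 1 / DIM('a)) * s)" "1 - capv y (real n powr (- 1 / DIM('a)) * s) \<le> 1"
        using capv_nonneg capv_le1 by auto
      then show "norm ((1 - capv y (real n powr (- 1 / DIM('a)) * s)) ^ n) \<le> 1"
        by (simp add: power_le_one)
    qed
  qed auto
  also have "(\<integral>y. L \<partial>(UC::'a measure)) = L"
    using UCp.prob_space by simp
  finally show ?thesis unfolding L_def .
qed

definition Phi :: "'a::euclidean_space itself \<Rightarrow> nat \<Rightarrow> real \<Rightarrow> real" where
  "Phi _ n t = (\<integral>y. (1 - capv (y::'a) t) ^ n \<partial>UC)"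

lemma Phi_measurable[measurable]: "Phi TYPE('a::euclidean_space) n \<in> borel_measurable borel"
proof -
  interpret UCp: prob_space "UC :: 'a measure" by (rule prob_space_UC)
  have "(\<lambda>(t, y). (1 - capv (y::'a) t) ^ n) \<in> borel_measurable (borel \<Otimes>\<^sub>M UC)"
    by measurable
  then show ?thesis unfolding Phi_def by (rule UCp.borel_measurable_lebesgue_integral)
qed

lemma Phi_nn: "(\<integral>\<^sup>+y. ennreal ((1 - capv (y::'a::euclidean_space) t) ^ n) \<partial>UC) = ennreal (Phi TYPE('a) n t)"
proof -
  interpret UCp: prob_space "UC :: 'a measure" by (rule prob_space_UC)
  show ?thesis unfolding Phi_def
  proof (rule nn_integral_eq_integral)
    show "integrable UC (\<lambda>y. (1 - capv (y::'a) t) ^ n)"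
      by (rule UCp.integrable_const_bound[where B=1]) (auto intro!: power_le_one simp: capv_le1 capv_nonneg)
  qed auto
qed

lemma capv_pow_le1[simp]: "(1 - capv x r) ^ n \<le> 1"
  using capv_nonneg[of x r] capv_le1[of x r] by (intro power_le_one) auto

lemma Phi_bounds: "0 \<le> Phi TYPE('a::euclidean_space) n t" "Phi TYPE('a) n t \<le> 1"
proof -
  interpret UCp: prob_space "UC :: 'a measure" by (rule prob_space_UC)
  show "0 \<le> Phi TYPE('a::euclidean_space) n t" unfolding Phi_def by (rule integral_nonneg_AE) auto
  have "Phi TYPE('a) n t \<le> (\<integral>y. 1 \<partial>(UC::'a measure))" unfolding Phi_def
    by (rule integral_mono) (auto intro!: UCp.integrable_const_bound[where B=1])
  then show "Phi TYPE('a) n t \<le> 1" using UCp.prob_space by simp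
qed

lemma Mi_Phi: "Mi TYPE('a::euclidean_space) a n = (\<integral>\<^sup>+t. ennreal (wp a t * Phi TYPE('a) n t) \<partial>lborel)" if "a \<ge> 0"
  unfolding Mi_def Phi_nn using that by (simp add: ennreal_mult wp_nonneg Phi_bounds)

lemma Mi_scaled:
  assumes a: "a > 0" and n: "n \<ge> 1"
  shows "real n powr (a / DIM('a)) * enn2real (Mi TYPE('a::euclidean_space) a n) =
      (\<integral>s. wp a s * Phi TYPE('a) n (real n powr (- 1 / DIM('a)) * s) \<partial>lborel)"
proof -
  define c where "c = real n powr (- 1 / DIM('a))"
  have c: "c > 0" using n by (simp add: c_def)
  have wpc: "wp a (c * s) = c powr (a - 1) * wp a s" for s
    using c by (cases "s > 0") (auto simp: wp_def powr_mult zero_less_mult_iff)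
  have "Mi TYPE('a) a n = (\<integral>\<^sup>+t. ennreal (wp a t * Phi TYPE('a) n t) \<partial>lborel)"
    using a by (simp add: Mi_Phi)
  also have "\<dots> = ennreal \<bar>c\<bar> * (\<integral>\<^sup>+s. ennreal (wp a (0 + c * s) * Phi TYPE('a) n (0 + c * s)) \<partial>lborel)"
    by (rule nn_integral_real_affine) (use c in auto)
  also have "\<dots> = ennreal c * (\<integral>\<^sup>+s. ennreal (c powr (a - 1)) * ennreal (wp a s * Phi TYPE('a) n (c * s)) \<partial>lborel)"
    using c a by (auto simp: wpc ennreal_mult[symmetric] wp_nonneg mult.assoc Phi_bounds intro!: nn_integral_cong)
  also have "\<dots> = ennreal c * (ennreal (c powr (a - 1)) * (\<integral>\<^sup>+s. ennreal (wp a s * Phi TYPE('a) n (c * s)) \<partial>lborel))"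
    by (subst nn_integral_cmult) auto
  finally have "enn2real (Mi TYPE('a) a n) = c * c powr (a - 1) * enn2real (\<integral>\<^sup>+s. ennreal (wp a s * Phi TYPE('a) n (c * s)) \<partial>lborel)"
    using c by (simp add: enn2real_mult)
  also have "c * c powr (a - 1) = c powr a" using c by (simp add: powr_diff)
  also have "enn2real (\<integral>\<^sup>+s. ennreal (wp a s * Phi TYPE('a) n (c * s)) \<partial>lborel) = (\<integral>s. wp a s * Phi TYPE('a) n (c * s) \<partial>lborel)"
    using a by (intro integral_eq_nn_integral[symmetric]) (auto intro!: mult_nonneg_nonneg wp_nonneg simp: Phi_bounds)
  finally have e: "enn2real (Mi TYPE('a) a n) = c powr a * (\<integral>s. wp a s * Phi TYPE('a) n (c * s) \<partial>lborel)" .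
  have "real n powr (a / DIM('a)) * c powr a = 1"
    using n unfolding c_def by (simp add: powr_powr powr_add[symmetric])
  then show ?thesis using e unfolding c_def by (metis mult.assoc mult_1)
qed

lemma Phi_scaled_bound:
  assumes s: "s \<ge> 0" and n: "n \<ge> 1"
  shows "Phi TYPE('a::euclidean_space) n (real n powr (- 1 / DIM('a)) * s) \<le> exp (- (1 / real DIM('a) ^ DIM('a)) * s ^ DIM('a))"
proof -
  interpret UCp: prob_space "UC :: 'a measure" by (rule prob_space_UC)
  define c where "c = real n powr (- 1 / DIM('a))"
  have c: "c > 0" using n by (simp add: c_def)
  have cD: "c ^ DIM('a) = 1 / real n" unfolding c_def using n by (intro cn_pow) auto
  have e: "real n * (c * s / DIM('a)) ^ DIM('a) = (1 / real DIM('a) ^ DIM('a)) * s ^ DIM('a)"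
    using n by (simp add: power_mult_distrib power_divide cD)
  have "Phi TYPE('a) n (c * s) \<le> (\<integral>y. exp (- (real n * (c * s / DIM('a)) ^ DIM('a))) \<partial>(UC::'a measure))"
    unfolding Phi_def
  proof (rule integral_mono_AE)
    show "AE y in UC. (1 - capv (y::'a) (c * s)) ^ n \<le> exp (- (real n * (c * s / DIM('a)) ^ DIM('a)))"
      using AE_UC_cbox by eventually_elim (rule pow_capv_bound, use c s in auto)
  qed (auto intro!: UCp.integrable_const_bound[where B=1])
  also have "\<dots> = exp (- (1 / real DIM('a) ^ DIM('a)) * s ^ DIM('a))"
    using UCp.prob_space by (simp add: e)
  finally show ?thesis unfolding c_def .
qed

lemma Mi_lim:
  assumes a: "a > 0"
  shows "(\<lambda>n. real n powr (a / DIM('a)) * enn2real (Mi TYPE('a::euclidean_space) a n))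
           \<longlonglongrightarrow> Gamma (1 + a / DIM('a)) * unit_ball_vol DIM('a) powr (- a / DIM('a))"
proof -
  define D where "D = DIM('a)"
  define v where "v = unit_ball_vol D"
  have D: "D > 0" by (simp add: D_def)
  have v: "v > 0" by (simp add: v_def)
  define hs where "hs = (\<lambda>n s. wp a s * Phi TYPE('a) n (real n powr (- 1 / D) * s))"
  define f where "f = (\<lambda>s. wp a s * s ^ 0 * exp (- v * s ^ D))"
  define w where "w = (\<lambda>s. wp a s * s ^ 0 * exp (- (1 / real D ^ D) * s ^ D))"
  have lim: "(\<lambda>n. \<integral>s. hs (Suc n) s \<partial>lborel) \<longlonglongrightarrow> (\<integral>s. f s \<partial>lborel)"
  proof (rule integral_dominated_convergence[where w=w])
    show "f \<in> borel_measurable lborel" unfolding f_def by measurable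
    show "\<And>n. hs (Suc n) \<in> borel_measurable lborel" unfolding hs_def by measurable
    have "(\<integral>\<^sup>+s. ennreal (w s) \<partial>lborel) = ennreal (Gc a D 0 (1 / real D ^ D))"
      unfolding w_def by (rule wp_gamma[OF a _ D]) (use D in auto)
    then show "integrable lborel w"
      by (intro integrableI_nn_integral_finite[where x="Gc a D 0 (1 / real D ^ D)"])
         (auto simp: w_def wp_nonneg a less_imp_le)
    show "AE s in lborel. (\<lambda>n. hs (Suc n) s) \<longlonglongrightarrow> f s"
    proof (intro AE_I2)
      fix s :: real
      show "(\<lambda>n. hs (Suc n) s) \<longlonglongrightarrow> f s"
      proof (cases "s > 0")
        case True
        have "(\<lambda>n. Phi TYPE('a) n (real n powr (- 1 / D) * s)) \<longlonglongrightarrow> exp (- (v * s ^ D))"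
          using Phi_lim[OF True, where 'a='a] unfolding Phi_def D_def v_def .
        then have "(\<lambda>n. Phi TYPE('a) (Suc n) (real (Suc n) powr (- 1 / D) * s)) \<longlonglongrightarrow> exp (- (v * s ^ D))"
          by (rule LIMSEQ_Suc)
        then show ?thesis unfolding hs_def f_def by (auto intro!: tendsto_mult_left)
      next
        case False
        then show ?thesis by (simp add: hs_def f_def wp_def)
      qed
    qed
    show "\<And>n. AE s in lborel. norm (hs (Suc n) s) \<le> w s"
    proof (intro AE_I2)
      fix n and s :: real
      show "norm (hs (Suc n) s) \<le> w s"
      proof (cases "s > 0")
        case True
        have "Phi TYPE('a) (Suc n) (real (Suc n) powr (- 1 / D) * s) \<le> exp (- (1 / real D ^ D) * s ^ D)"
          unfolding D_def by (rule Phi_scaled_bound) (use True in auto)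
        then have "wp a s * Phi TYPE('a) (Suc n) (real (Suc n) powr (- 1 / D) * s) \<le> wp a s * exp (- (1 / real D ^ D) * s ^ D)"
          using a by (intro mult_left_mono wp_nonneg) auto
        then show ?thesis using a by (simp add: hs_def w_def Phi_bounds wp_nonneg)
      next
        case False
        then show ?thesis by (simp add: hs_def w_def wp_def)
      qed
    qed
  qed
  have If: "(\<integral>s. f s \<partial>lborel) = Gc a D 0 v"
  proof -
    have "(\<integral>s. f s \<partial>lborel) = enn2real (\<integral>\<^sup>+s. ennreal (f s) \<partial>lborel)"
      by (rule integral_eq_nn_integral) (auto simp: f_def wp_nonneg a less_imp_le)
    also have "(\<integral>\<^sup>+s. ennreal (f s) \<partial>lborel) = ennreal (Gc a D 0 v)"
      unfolding f_def by (rule wp_gamma[OF a v D])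
    finally show ?thesis using Gc_nonneg[OF a D v] by simp
  qed
  have Gc_eq: "Gc a D 0 v = Gamma (1 + a / D) * v powr (- a / D)"
  proof -
    have pos: "a / D > 0" using a D by simp
    have "a / D \<notin> \<int>\<^sub>\<le>\<^sub>0" using nonpos_Ints_nonpos[of "a / D"] pos by auto
    then have "Gamma (1 + a / D) = a / D * Gamma (a / D)"
      using Gamma_plus1[of "a / D"] by (simp add: add.commute)
    then show ?thesis using D v by (simp add: Gc_def powr_minus_divide field_simps)
  qed
  have eq: "real (Suc n) powr (a / D) * enn2real (Mi TYPE('a) a (Suc n)) = (\<integral>s. hs (Suc n) s \<partial>lborel)" for n
    unfolding hs_def D_def by (rule Mi_scaled[OF a]) simp
  have "(\<lambda>n. real (Suc n) powr (a / D) * enn2real (Mi TYPE('a) a (Suc n))) \<longlonglongrightarrow> Gc a D 0 v"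
    unfolding eq using lim If by simp
  then have "(\<lambda>n. real n powr (a / D) * enn2real (Mi TYPE('a) a n)) \<longlonglongrightarrow> Gc a D 0 v"
    by (rule LIMSEQ_imp_Suc)
  then have "(\<lambda>n. real n powr (a / D) * enn2real (Mi TYPE('a) a n)) \<longlonglongrightarrow> Gamma (1 + a / D) * v powr (- a / D)"
    by (simp only: Gc_eq)
  then show ?thesis by (simp add: D_def v_def)
qed

lemma pow_step_upper:
  fixes b :: real and k :: nat
  assumes b: "0 < b" "b < 1" and k: "k \<ge> 1"
  shows "real k powr (- b) \<le> (real k powr (1 - b) - real (k - 1) powr (1 - b)) / (1 - b)"
proof (cases "k = 1")
  case True then show ?thesis using b by (simp add: field_simps)
next
  case False
  then have k2: "k \<ge> 2" using k by simp
  have der: "DERIV (\<lambda>x. x powr (1 - b)) x :> (1 - b) * x powr (1 - b - 1)" if "real (k - 1) \<le> x" for x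
    using that k2 by (intro has_real_derivative_powr) (auto simp: of_nat_diff)
  have lt: "real (k - 1) < real k" using k2 by simp
  have "\<exists>z. real (k - 1) < z \<and> z < real k \<and>
    real k powr (1 - b) - real (k - 1) powr (1 - b) = (real k - real (k - 1)) * ((1 - b) * z powr (1 - b - 1))"
    by (rule MVT2[OF lt]) (rule der, simp)
  then obtain z where z: "real (k - 1) < z" "z < real k"
    "real k powr (1 - b) - real (k - 1) powr (1 - b) = (real k - real (k - 1)) * ((1 - b) * z powr (1 - b - 1))"
    by blast
  have zpos: "z > 0" using z(1) k2 by (smt (verit) of_nat_0_le_iff)
  have "real k powr (- b) \<le> z powr (- b)"
    using zpos z(2) b by (intro powr_mono2') auto
  then have "(1 - b) * real k powr (- b) \<le> (1 - b) * z powr (- b)" using b by (intro mult_left_mono) auto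
  moreover have "real k - real (k - 1) = 1" using k2 by (simp add: of_nat_diff)
  ultimately have "(1 - b) * real k powr (- b) \<le> real k powr (1 - b) - real (k - 1) powr (1 - b)"
    using z(3) by simp
  then show ?thesis using b by (simp add: le_divide_eq mult.commute)
qed

lemma pow_step_lower:
  fixes b :: real and k :: nat
  assumes b: "0 < b" "b < 1" and k: "k \<ge> 1"
  shows "(real (k + 1) powr (1 - b) - real k powr (1 - b)) / (1 - b) \<le> real k powr (- b)"
proof -
  have der: "DERIV (\<lambda>x. x powr (1 - b)) x :> (1 - b) * x powr (1 - b - 1)" if "real k \<le> x" for x
    using that k by (intro has_real_derivative_powr) auto
  have lt: "real k < real (k + 1)" by simp
  have "\<exists>z. real k < z \<and> z < real (k + 1) \<and>
    real (k + 1) powr (1 - b) - real k powr (1 - b) = (real (k + 1) - real k) * ((1 - b) * z powr (1 - b - 1))"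
    by (rule MVT2[OF lt]) (rule der, simp)
  then obtain z where z: "real k < z" "z < real (k + 1)"
    "real (k + 1) powr (1 - b) - real k powr (1 - b) = (real (k + 1) - real k) * ((1 - b) * z powr (1 - b - 1))"
    by blast
  have "z powr (- b) \<le> real k powr (- b)"
    using z(1) b k by (intro powr_mono2') auto
  then have "(1 - b) * z powr (- b) \<le> (1 - b) * real k powr (- b)" using b by (intro mult_left_mono) auto
  then have "real (k + 1) powr (1 - b) - real k powr (1 - b) \<le> (1 - b) * real k powr (- b)"
    using z(3) by simp
  then show ?thesis using b by (simp add: divide_le_eq mult.commute)
qed

lemma powsum_upper:
  fixes b :: real assumes b: "0 < b" "b < 1"
  shows "(\<Sum>k\<in>{1..<Suc n}. real k powr (- b)) \<le> real n powr (1 - b) / (1 - b)"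
proof (induction n)
  case 0 then show ?case by simp
next
  case (Suc n)
  have "(\<Sum>k\<in>{1..<Suc (Suc n)}. real k powr (- b)) = (\<Sum>k\<in>{1..<Suc n}. real k powr (- b)) + real (Suc n) powr (- b)"
    by simp
  also have "\<dots> \<le> real n powr (1 - b) / (1 - b) + (real (Suc n) powr (1 - b) - real (Suc n - 1) powr (1 - b)) / (1 - b)"
    using Suc.IH pow_step_upper[OF b, of "Suc n"] by simp
  also have "\<dots> = real (Suc n) powr (1 - b) / (1 - b)" by (subst add_divide_distrib[symmetric]) simp
  finally show ?case .
qed

lemma powsum_lower:
  fixes b :: real assumes b: "0 < b" "b < 1"
  shows "(real (Suc n) powr (1 - b) - 1) / (1 - b) \<le> (\<Sum>k\<in>{1..<Suc n}. real k powr (- b))"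
proof (induction n)
  case 0 then show ?case by simp
next
  case (Suc n)
  have "(real (Suc (Suc n)) powr (1 - b) - 1) / (1 - b) =
      (real (Suc n) powr (1 - b) - 1) / (1 - b) + (real (Suc n + 1) powr (1 - b) - real (Suc n) powr (1 - b)) / (1 - b)"
    by (subst add_divide_distrib[symmetric]) simp
  also have "\<dots> \<le> (\<Sum>k\<in>{1..<Suc n}. real k powr (- b)) + real (Suc n) powr (- b)"
    using Suc.IH pow_step_lower[OF b, of "Suc n"] by simp
  also have "\<dots> = (\<Sum>k\<in>{1..<Suc (Suc n)}. real k powr (- b))" by simp
  finally show ?case .
qed

lemma powsum_upper': 
  fixes b :: real assumes b: "0 < b" "b < 1"
  shows "(\<Sum>k\<in>{1..<n}. real k powr (- b)) \<le> real n powr (1 - b) / (1 - b)"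
proof (cases n)
  case 0 then show ?thesis using b by simp
next
  case (Suc m)
  have "(\<Sum>k\<in>{1..<n}. real k powr (- b)) \<le> real m powr (1 - b) / (1 - b)"
    using powsum_upper[OF b, of m] Suc by simp
  also have "\<dots> \<le> real n powr (1 - b) / (1 - b)"
    using b Suc by (intro divide_right_mono powr_mono2) auto
  finally show ?thesis .
qed

lemma powsum_lim:
  fixes b :: real assumes b: "0 < b" "b < 1"
  shows "(\<lambda>n. real n powr (b - 1) * (\<Sum>k\<in>{1..<n}. real k powr (- b))) \<longlonglongrightarrow> 1 / (1 - b)"
proof (rule tendsto_sandwich[where f="\<lambda>n. (1 - real n powr (b - 1)) / (1 - b)" and h="\<lambda>n. 1 / (1 - b)"])
  show "\<forall>\<^sub>F n in sequentially. (1 - real n powr (b - 1)) / (1 - b) \<le> real n powr (b - 1) * (\<Sum>k\<in>{1..<n}. real k powr (- b))"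
  proof (rule eventually_sequentiallyI[of 1])
    fix n :: nat assume n: "n \<ge> 1"
    then obtain m where m: "n = Suc m" by (cases n) auto
    have "(real n powr (1 - b) - 1) / (1 - b) \<le> (\<Sum>k\<in>{1..<n}. real k powr (- b))"
      using powsum_lower[OF b, of m] m by simp
    then have le: "real n powr (b - 1) * ((real n powr (1 - b) - 1) / (1 - b)) \<le> real n powr (b - 1) * (\<Sum>k\<in>{1..<n}. real k powr (- b))"
      by (intro mult_left_mono) auto
    have eq: "(1 - real n powr (b - 1)) / (1 - b) = real n powr (b - 1) * ((real n powr (1 - b) - 1) / (1 - b))"
      using n b by (simp add: field_simps powr_add[symmetric])
    show "(1 - real n powr (b - 1)) / (1 - b) \<le> real n powr (b - 1) * (\<Sum>k\<in>{1..<n}. real k powr (- b))"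
      unfolding eq by (rule le)
  qed
  show "\<forall>\<^sub>F n in sequentially. real n powr (b - 1) * (\<Sum>k\<in>{1..<n}. real k powr (- b)) \<le> 1 / (1 - b)"
  proof (rule eventually_sequentiallyI[of 1])
    fix n :: nat assume n: "n \<ge> 1"
    have "real n powr (b - 1) * (\<Sum>k\<in>{1..<n}. real k powr (- b)) \<le> real n powr (b - 1) * (real n powr (1 - b) / (1 - b))"
      using powsum_upper'[OF b, of n] by (intro mult_left_mono) auto
    also have "\<dots> = 1 / (1 - b)" using n b by (simp add: field_simps powr_add[symmetric])
    finally show "real n powr (b - 1) * (\<Sum>k\<in>{1..<n}. real k powr (- b)) \<le> 1 / (1 - b)" .
  qed
  have "(\<lambda>n. real n powr (b - 1)) \<longlonglongrightarrow> 0"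
    using b by (intro tendsto_neg_powr filterlim_real_sequentially) auto
  then have "(\<lambda>n. (1 - real n powr (b - 1)) / (1 - b)) \<longlonglongrightarrow> (1 - 0) / (1 - b)"
    by (intro tendsto_divide tendsto_diff tendsto_const) (use b in auto)
  then show "(\<lambda>n. (1 - real n powr (b - 1)) / (1 - b)) \<longlonglongrightarrow> 1 / (1 - b)" by simp
qed auto

lemma powsum_scaled_le:
  fixes b :: real assumes b: "0 < b" "b < 1" and n: "n \<ge> 1"
  shows "real n powr (b - 1) * (\<Sum>k\<in>{1..<n}. real k powr (- b)) \<le> 1 / (1 - b)"
proof -
  have "real n powr (b - 1) * (\<Sum>k\<in>{1..<n}. real k powr (- b)) \<le> real n powr (b - 1) * (real n powr (1 - b) / (1 - b))"
    using powsum_upper'[OF b, of n] by (intro mult_left_mono) auto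
  also have "\<dots> = 1 / (1 - b)" using n b by (simp add: field_simps powr_add[symmetric])
  finally show ?thesis .
qed

lemma cesaro_zero:
  fixes b :: real and e :: "nat \<Rightarrow> real"
  assumes b: "0 < b" "b < 1" and e: "e \<longlonglongrightarrow> 0"
  shows "(\<lambda>n. real n powr (b - 1) * (\<Sum>k\<in>{1..<n}. real k powr (- b) * e k)) \<longlonglongrightarrow> 0"
proof (rule LIMSEQ_I)
  fix r :: real assume r: "r > 0"
  define r' where "r' = r * (1 - b) / 2"
  have r': "r' > 0" using r b by (simp add: r'_def)
  obtain N0 where N0: "\<And>k. k \<ge> N0 \<Longrightarrow> norm (e k - 0) < r'"
    using LIMSEQ_D[OF e r'] by blast
  define N where "N = max N0 1"
  have N: "\<And>k. k \<ge> N \<Longrightarrow> \<bar>e k\<bar> < r'" "N \<ge> 1" using N0 by (auto simp: N_def)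
  define C where "C = (\<Sum>k\<in>{1..<N}. real k powr (- b) * \<bar>e k\<bar>)"
  have "(\<lambda>n. real n powr (b - 1) * C) \<longlonglongrightarrow> 0 * C"
    using b by (intro tendsto_mult tendsto_const tendsto_neg_powr filterlim_real_sequentially) auto
  then obtain N2 where N2: "\<And>n. n \<ge> N2 \<Longrightarrow> norm (real n powr (b - 1) * C - 0) < r / 2"
    using LIMSEQ_D[of _ 0 "r / 2"] r by fastforce
  show "\<exists>no. \<forall>n\<ge>no. norm (real n powr (b - 1) * (\<Sum>k\<in>{1..<n}. real k powr (- b) * e k) - 0) < r"
  proof (intro exI allI impI)
    fix n assume n: "n \<ge> max N N2"
    then have nN: "n \<ge> N" and n1: "n \<ge> 1" using N by auto
    have split: "{1..<n} = {1..<N} \<union> {N..<n}" using nN N by auto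
    have "\<bar>\<Sum>k\<in>{1..<n}. real k powr (- b) * e k\<bar> \<le> (\<Sum>k\<in>{1..<n}. real k powr (- b) * \<bar>e k\<bar>)"
      by (rule order_trans[OF sum_abs]) (simp add: abs_mult)
    also have "\<dots> = C + (\<Sum>k\<in>{N..<n}. real k powr (- b) * \<bar>e k\<bar>)"
      unfolding C_def split by (rule sum.union_disjoint) auto
    also have "(\<Sum>k\<in>{N..<n}. real k powr (- b) * \<bar>e k\<bar>) \<le> (\<Sum>k\<in>{N..<n}. real k powr (- b) * r')"
      using N by (intro sum_mono mult_left_mono) (auto simp: less_imp_le)
    also have "\<dots> \<le> (\<Sum>k\<in>{1..<n}. real k powr (- b) * r')"
      using r' N by (intro sum_mono2) auto
    also have "\<dots> = r' * (\<Sum>k\<in>{1..<n}. real k powr (- b))" by (simp add: sum_distrib_left mult.commute)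
    finally have bnd: "\<bar>\<Sum>k\<in>{1..<n}. real k powr (- b) * e k\<bar> \<le> C + r' * (\<Sum>k\<in>{1..<n}. real k powr (- b))" by simp
    have pos: "real n powr (b - 1) > 0" using n1 by simp
    have "\<bar>real n powr (b - 1) * (\<Sum>k\<in>{1..<n}. real k powr (- b) * e k)\<bar> \<le>
        real n powr (b - 1) * (C + r' * (\<Sum>k\<in>{1..<n}. real k powr (- b)))"
      using bnd pos by (simp add: abs_mult mult_left_mono)
    also have "\<dots> = real n powr (b - 1) * C + r' * (real n powr (b - 1) * (\<Sum>k\<in>{1..<n}. real k powr (- b)))"
      by (simp add: algebra_simps)
    also have "\<dots> < r / 2 + r' * (1 / (1 - b))"
    proof (rule add_less_le_mono)
      show "real n powr (b - 1) * C < r / 2" using N2[of n] n by auto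
      show "r' * (real n powr (b - 1) * (\<Sum>k\<in>{1..<n}. real k powr (- b))) \<le> r' * (1 / (1 - b))"
        using r' powsum_scaled_le[OF b n1] by (intro mult_left_mono) auto
    qed
    also have "\<dots> = r" using b by (simp add: r'_def field_simps)
    finally show "norm (real n powr (b - 1) * (\<Sum>k\<in>{1..<n}. real k powr (- b) * e k) - 0) < r" by simp
  qed
qed

lemma cesaro_pow:
  fixes b L :: real and m :: "nat \<Rightarrow> real"
  assumes b: "0 < b" "b < 1" and lim: "(\<lambda>k. real k powr b * m k) \<longlonglongrightarrow> L"
  shows "(\<lambda>n. real n powr (b - 1) * (\<Sum>k\<in>{1..<n}. m k)) \<longlonglongrightarrow> L / (1 - b)"
proof -
  define e where "e = (\<lambda>k. real k powr b * m k - L)"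
  have e: "e \<longlonglongrightarrow> 0" unfolding e_def using tendsto_diff[OF lim tendsto_const[of L]] by simp
  have dec: "real n powr (b - 1) * (\<Sum>k\<in>{1..<n}. m k) =
      L * (real n powr (b - 1) * (\<Sum>k\<in>{1..<n}. real k powr (- b))) +
      real n powr (b - 1) * (\<Sum>k\<in>{1..<n}. real k powr (- b) * e k)" for n
  proof -
    have "m k = L * real k powr (- b) + real k powr (- b) * e k" if "k \<in> {1..<n}" for k
    proof -
      have "real k powr (- b) * real k powr b = 1" using that by (simp add: powr_add[symmetric])
      then show ?thesis unfolding e_def by (simp add: algebra_simps)
    qed
    then have "(\<Sum>k\<in>{1..<n}. m k) = L * (\<Sum>k\<in>{1..<n}. real k powr (- b)) + (\<Sum>k\<in>{1..<n}. real k powr (- b) * e k)"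
      by (simp add: sum.distrib sum_distrib_left)
    then show ?thesis by (simp add: algebra_simps)
  qed
  have "(\<lambda>n. L * (real n powr (b - 1) * (\<Sum>k\<in>{1..<n}. real k powr (- b))) +
      real n powr (b - 1) * (\<Sum>k\<in>{1..<n}. real k powr (- b) * e k)) \<longlonglongrightarrow> L * (1 / (1 - b)) + 0"
    by (intro tendsto_add tendsto_mult tendsto_const powsum_lim[OF b] cesaro_zero[OF b e])
  then show ?thesis unfolding dec by simp
qed

lemma Gc_scale:
  assumes n: "n > 0" and c: "c > 0"
  shows "Gc a D p (n * c) = Gc a D p c * n powr (- ((a + p) / D))"
  using n c by (simp add: Gc_def powr_mult powr_minus field_simps)

definition Kc :: "real \<Rightarrow> nat \<Rightarrow> real" where
  "Kc a D = 2 * unit_ball_vol D * 2 ^ D * Gc a D D (1 / (2 * D ^ D)) * Gc a D 0 (1 / (2 * D ^ D))"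

lemma Kc_nonneg: "a > 0 \<Longrightarrow> D > 0 \<Longrightarrow> 0 \<le> Kc a D"
  unfolding Kc_def by (intro mult_nonneg_nonneg Gc_nonneg) auto

lemma cross_nn_bound:
  assumes ij: "1 \<le> i" "i < j" and a: "a > 0"
  shows "(\<integral>\<^sup>+x. ennreal (ong_nn_dist x i powr a * ong_nn_dist x j powr a) \<partial>PiM {..j} (\<lambda>_. UC :: 'a::euclidean_space measure))
    \<le> Mi TYPE('a) a i * Mi TYPE('a) a (j - 1) +
       ennreal (Kc a DIM('a) * (real i powr (- 1 - a / DIM('a)) * real (j - 1) powr (- (a / DIM('a)))))"
proof -
  define D where "D = DIM('a)"
  have D: "D > 0" by (simp add: D_def)
  define c where "c = 1 / (2 * real D ^ D)"
  have c: "c > 0" using D by (simp add: c_def)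
  define G0 where "G0 = Gc a D 0 c"
  define GD where "GD = Gc a D D c"
  have G0: "G0 \<ge> 0" and GD: "GD \<ge> 0" using Gc_nonneg[OF a D c] by (auto simp: G0_def GD_def)
  have i0: "real i > 0" and j0: "real (j - 1) > 0" using ij by auto
  have l1: "real i / (2 * real D ^ D) = real i * c" by (simp add: c_def)
  have l2: "real (j - 1) / (2 * real D ^ D) = real (j - 1) * c" by (simp add: c_def)
  have e1: "(a + real D) / D = 1 + a / D" using D by (simp add: field_simps)
  define Kij where "Kij = unit_ball_vol D * 2 ^ D * (Gc a D D (real i / (2 * D ^ D)) * Gc a D 0 (real (j - 1) / (2 * D ^ D)) +
                    Gc a D 0 (real i / (2 * D ^ D)) * Gc a D D (real (j - 1) / (2 * D ^ D)))"
  have Kij_eq: "Kij = unit_ball_vol D * 2 ^ D * GD * G0 *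
      (real i powr (- 1 - a / D) * real (j - 1) powr (- (a / D)) + real i powr (- (a / D)) * real (j - 1) powr (- 1 - a / D))"
  proof -
    have gi: "Gc a D p (real i / real (2 * D ^ D)) = Gc a D p c * real i powr (- ((a + p) / D))" for p
      using Gc_scale[OF i0 c, of a D p] by (simp add: c_def)
    have gj: "Gc a D p (real (j - 1) / real (2 * D ^ D)) = Gc a D p c * real (j - 1) powr (- ((a + p) / D))" for p
      using Gc_scale[OF j0 c, of a D p] by (simp add: c_def)
    have e2: "- ((a + real D) / D) = - 1 - a / D" using e1 by simp
    have e3: "- ((a + real 0) / D) = - (a / D)" by simp
    have h1: "Gc a D D (real i / real (2 * D ^ D)) = GD * real i powr (- 1 - a / D)"
      using gi[of D] e2 by (simp add: GD_def)
    have h2: "Gc a D 0 (real i / real (2 * D ^ D)) = G0 * real i powr (- (a / D))"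
      using gi[of 0] by (simp add: G0_def)
    have h3: "Gc a D D (real (j - 1) / real (2 * D ^ D)) = GD * real (j - 1) powr (- 1 - a / D)"
      using gj[of D] e2 by (simp add: GD_def)
    have h4: "Gc a D 0 (real (j - 1) / real (2 * D ^ D)) = G0 * real (j - 1) powr (- (a / D))"
      using gj[of 0] by (simp add: G0_def)
    show ?thesis unfolding Kij_def h1 h2 h3 h4
      by (simp add: algebra_simps)
  qed
  have mono: "real i powr (- (a / D)) * real (j - 1) powr (- 1 - a / D) \<le> real i powr (- 1 - a / D) * real (j - 1) powr (- (a / D))"
  proof -
    have "real (j - 1) powr (- 1) \<le> real i powr (- 1)" using ij by (intro powr_mono2') auto
    then have "real i powr (- (a / D)) * (real (j - 1) powr (- (a / D)) * real (j - 1) powr (- 1)) \<le>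
               real i powr (- (a / D)) * (real (j - 1) powr (- (a / D)) * real i powr (- 1))"
      by (intro mult_left_mono) auto
    moreover have ee: "- 1 - a / D = - (a / D) + (- 1)" by simp
    have "real (j - 1) powr (- 1 - a / D) = real (j - 1) powr (- (a / D)) * real (j - 1) powr (- 1)"
      by (simp only: ee powr_add)
    moreover have "real i powr (- 1 - a / D) = real i powr (- (a / D)) * real i powr (- 1)"
      by (simp only: ee powr_add)
    ultimately show ?thesis by (simp add: mult_ac)
  qed
  have Kij_le: "Kij \<le> Kc a D * (real i powr (- 1 - a / D) * real (j - 1) powr (- (a / D)))"
  proof -
    have "Kij \<le> unit_ball_vol D * 2 ^ D * GD * G0 *
      (real i powr (- 1 - a / D) * real (j - 1) powr (- (a / D)) + real i powr (- 1 - a / D) * real (j - 1) powr (- (a / D)))"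
      unfolding Kij_eq using mono G0 GD D by (intro mult_left_mono add_left_mono) auto
    also have "\<dots> = Kc a D * (real i powr (- 1 - a / D) * real (j - 1) powr (- (a / D)))"
      by (simp add: Kc_def G0_def GD_def c_def algebra_simps)
    finally show ?thesis .
  qed
  have "(\<integral>\<^sup>+x. ennreal (ong_nn_dist x i powr a * ong_nn_dist x j powr a) \<partial>PiM {..j} (\<lambda>_. UC :: 'a measure))
      \<le> Mi TYPE('a) a i * Mi TYPE('a) a (j - 1) + ennreal Kij"
    unfolding two_point[OF ij a] Kij_def D_def by (rule two_point_bound[OF ij a])
  also have "\<dots> \<le> Mi TYPE('a) a i * Mi TYPE('a) a (j - 1) +
       ennreal (Kc a D * (real i powr (- 1 - a / D) * real (j - 1) powr (- (a / D))))"
    by (intro add_left_mono ennreal_leI Kij_le)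
  finally show ?thesis by (simp add: D_def)
qed

definition Xv :: "(nat \<Rightarrow> 'b \<Rightarrow> 'a::metric_space) \<Rightarrow> real \<Rightarrow> nat \<Rightarrow> 'b \<Rightarrow> real" where
  "Xv U a i \<omega> = ong_nn_dist (\<lambda>k. U k \<omega>) i powr a"

lemma nnd_restrict: "i \<in> I \<Longrightarrow> {..<i} \<subseteq> I \<Longrightarrow> ong_nn_dist (restrict x I) i = ong_nn_dist x i"
  unfolding ong_nn_dist_def by (intro arg_cong[where f=Min] image_cong) auto

lemma Xv_nonneg: "0 \<le> Xv U a i \<omega>"
  by (simp add: Xv_def)

context
  fixes M :: "'b measure" and U :: "nat \<Rightarrow> 'b \<Rightarrow> 'a::euclidean_space" and \<alpha> :: real
  assumes M: "prob_space M" and ind: "prob_space.indep_vars M (\<lambda>_. borel) U UNIV"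
    and distr: "\<And>i. distr M borel (U i) = UC"
    and a: "\<alpha> > 0"
begin

lemma U_meas[measurable]: "U i \<in> borel_measurable M"
  using ind M unfolding prob_space.indep_vars_def[OF M] by auto

lemma Xv_meas[measurable]: "Xv U b i \<in> borel_measurable M"
  unfolding Xv_def ong_nn_dist_def by measurable

lemma nn_X:
  assumes i: "i \<ge> 1" and b: "b > 0"
  shows "(\<integral>\<^sup>+\<omega>. ennreal (Xv U b i \<omega>) \<partial>M) = Mi TYPE('a) b i"
proof -
  have "(\<integral>\<^sup>+\<omega>. ennreal (ong_nn_dist (\<lambda>k\<in>{..i}. U k \<omega>) i powr b) \<partial>M) =
        (\<integral>\<^sup>+x. ennreal (ong_nn_dist x i powr b) \<partial>PiM {..i} (\<lambda>_. UC :: 'a measure))"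
  proof (rule transfer[OF M ind distr, where f="\<lambda>x. ennreal (ong_nn_dist x i powr b)"])
    have [measurable]: "(\<lambda>x. ong_nn_dist x i) \<in> borel_measurable (PiM {..i} (\<lambda>_. UC :: 'a measure))"
      by (intro nnd_measurable) auto
    show "(\<lambda>x. ennreal (ong_nn_dist x i powr b)) \<in> borel_measurable (PiM {..i} (\<lambda>_. UC :: 'a measure))"
      by measurable
  qed auto
  also have "\<dots> = Mi TYPE('a) b i" by (rule one_point[OF i b])
  moreover have "ong_nn_dist (\<lambda>k\<in>{..i}. U k \<omega>) i = ong_nn_dist (\<lambda>k. U k \<omega>) i" for \<omega>
    by (intro nnd_restrict) auto
  ultimately show ?thesis by (simp add: Xv_def)
qed

lemma nn_XX:
  assumes ij: "1 \<le> i" "i < j"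
  shows "(\<integral>\<^sup>+\<omega>. ennreal (Xv U \<alpha> i \<omega> * Xv U \<alpha> j \<omega>) \<partial>M) \<le> Mi TYPE('a) \<alpha> i * Mi TYPE('a) \<alpha> (j - 1) +
       ennreal (Kc \<alpha> DIM('a) * (real i powr (- 1 - \<alpha> / DIM('a)) * real (j - 1) powr (- (\<alpha> / DIM('a)))))"
proof -
  have "(\<integral>\<^sup>+\<omega>. ennreal (ong_nn_dist (\<lambda>k\<in>{..j}. U k \<omega>) i powr \<alpha> * ong_nn_dist (\<lambda>k\<in>{..j}. U k \<omega>) j powr \<alpha>) \<partial>M) =
        (\<integral>\<^sup>+x. ennreal (ong_nn_dist x i powr \<alpha> * ong_nn_dist x j powr \<alpha>) \<partial>PiM {..j} (\<lambda>_. UC :: 'a measure))"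
  proof (rule transfer[OF M ind distr, where f="\<lambda>x. ennreal (ong_nn_dist x i powr \<alpha> * ong_nn_dist x j powr \<alpha>)"])
    have [measurable]: "(\<lambda>x. ong_nn_dist x i) \<in> borel_measurable (PiM {..j} (\<lambda>_. UC :: 'a measure))"
      using ij by (intro nnd_measurable) auto
    have [measurable]: "(\<lambda>x. ong_nn_dist x j) \<in> borel_measurable (PiM {..j} (\<lambda>_. UC :: 'a measure))"
      by (intro nnd_measurable) auto
    show "(\<lambda>x. ennreal (ong_nn_dist x i powr \<alpha> * ong_nn_dist x j powr \<alpha>)) \<in> borel_measurable (PiM {..j} (\<lambda>_. UC :: 'a measure))"
      by measurable
  qed auto
  also have "\<dots> \<le> Mi TYPE('a) \<alpha> i * Mi TYPE('a) \<alpha> (j - 1) +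
       ennreal (Kc \<alpha> DIM('a) * (real i powr (- 1 - \<alpha> / DIM('a)) * real (j - 1) powr (- (\<alpha> / DIM('a)))))"
    by (rule cross_nn_bound[OF ij a])
  moreover have "ong_nn_dist (\<lambda>k\<in>{..j}. U k \<omega>) i = ong_nn_dist (\<lambda>k. U k \<omega>) i" for \<omega>
    using ij by (intro nnd_restrict) auto
  moreover have "ong_nn_dist (\<lambda>k\<in>{..j}. U k \<omega>) j = ong_nn_dist (\<lambda>k. U k \<omega>) j" for \<omega>
    by (intro nnd_restrict) auto
  ultimately show ?thesis by (simp add: Xv_def)
qed

lemma Xv_sq: "Xv U \<alpha> i \<omega> ^ 2 = Xv U (2 * \<alpha>) i \<omega>"
  by (simp add: Xv_def power2_eq_square powr_add[symmetric])

lemma Mi_fin: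
  assumes i: "i \<ge> 1" and b: "b > 0"
  shows "Mi TYPE('a) b i = ennreal (enn2real (Mi TYPE('a) b i))"
    "enn2real (Mi TYPE('a) b i) \<le> Gc b DIM('a) 0 (i / DIM('a) ^ DIM('a))"
proof -
  have le: "Mi TYPE('a) b i \<le> ennreal (Gc b DIM('a) 0 (i / DIM('a) ^ DIM('a)))" by (rule Mi_bound[OF b i])
  then have "Mi TYPE('a) b i \<noteq> \<infinity>" by (auto simp: top_unique)
  then show "Mi TYPE('a) b i = ennreal (enn2real (Mi TYPE('a) b i))" by (simp add: ennreal_enn2real_if)
  show "enn2real (Mi TYPE('a) b i) \<le> Gc b DIM('a) 0 (i / DIM('a) ^ DIM('a))"
    using le i b by (intro enn2real_leI Gc_nonneg) auto
qed

lemma int_X: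
  assumes i: "i \<ge> 1" and b: "b > 0"
  shows "integrable M (Xv U b i)" "(\<integral>\<omega>. Xv U b i \<omega> \<partial>M) = enn2real (Mi TYPE('a) b i)"
proof -
  have nn: "(\<integral>\<^sup>+\<omega>. ennreal (Xv U b i \<omega>) \<partial>M) = ennreal (enn2real (Mi TYPE('a) b i))"
    using nn_X[OF i b] Mi_fin(1)[OF i b] by simp
  show "integrable M (Xv U b i)"
    by (rule integrableI_nn_integral_finite[OF _ _ nn]) (auto simp: Xv_nonneg)
  show "(\<integral>\<omega>. Xv U b i \<omega> \<partial>M) = enn2real (Mi TYPE('a) b i)"
    by (subst integral_eq_nn_integral) (auto simp: Xv_nonneg nn_X[OF i b])
qed

lemma int_X2:
  assumes i: "i \<ge> 1"
  shows "integrable M (\<lambda>\<omega>. Xv U \<alpha> i \<omega> ^ 2)" "(\<integral>\<omega>. Xv U \<alpha> i \<omega> ^ 2 \<partial>M) \<le> Gc (2 * \<alpha>) DIM('a) 0 (i / DIM('a) ^ DIM('a))"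
proof -
  have a2: "2 * \<alpha> > 0" using a by simp
  show "integrable M (\<lambda>\<omega>. Xv U \<alpha> i \<omega> ^ 2)" unfolding Xv_sq by (rule int_X(1)[OF i a2])
  show "(\<integral>\<omega>. Xv U \<alpha> i \<omega> ^ 2 \<partial>M) \<le> Gc (2 * \<alpha>) DIM('a) 0 (i / DIM('a) ^ DIM('a))"
    unfolding Xv_sq int_X(2)[OF i a2] by (rule Mi_fin(2)[OF i a2])
qed

lemma int_XX_lt:
  assumes ij: "1 \<le> i" "i < j"
  shows "integrable M (\<lambda>\<omega>. Xv U \<alpha> i \<omega> * Xv U \<alpha> j \<omega>)"
    "(\<integral>\<omega>. Xv U \<alpha> i \<omega> * Xv U \<alpha> j \<omega> \<partial>M) \<le> enn2real (Mi TYPE('a) \<alpha> i) * enn2real (Mi TYPE('a) \<alpha> (j - 1)) +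
       Kc \<alpha> DIM('a) * (real i powr (- 1 - \<alpha> / DIM('a)) * real (j - 1) powr (- (\<alpha> / DIM('a))))"
proof -
  have j1: "j - 1 \<ge> 1" using ij by simp
  define B where "B = enn2real (Mi TYPE('a) \<alpha> i) * enn2real (Mi TYPE('a) \<alpha> (j - 1)) +
       Kc \<alpha> DIM('a) * (real i powr (- 1 - \<alpha> / DIM('a)) * real (j - 1) powr (- (\<alpha> / DIM('a))))"
  have B0: "0 \<le> B" unfolding B_def using Kc_nonneg[OF a, of "DIM('a)"] by auto
  have le: "(\<integral>\<^sup>+\<omega>. ennreal (Xv U \<alpha> i \<omega> * Xv U \<alpha> j \<omega>) \<partial>M) \<le> ennreal B"
  proof -
    have "(\<integral>\<^sup>+\<omega>. ennreal (Xv U \<alpha> i \<omega> * Xv U \<alpha> j \<omega>) \<partial>M) \<le> Mi TYPE('a) \<alpha> i * Mi TYPE('a) \<alpha> (j - 1) +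
       ennreal (Kc \<alpha> DIM('a) * (real i powr (- 1 - \<alpha> / DIM('a)) * real (j - 1) powr (- (\<alpha> / DIM('a)))))"
      by (rule nn_XX[OF ij])
    also have "\<dots> = ennreal B"
      unfolding B_def using Kc_nonneg[OF a, of "DIM('a)"]
      by (subst Mi_fin(1)[OF _ a, of i], use ij in simp, subst Mi_fin(1)[OF j1 a])
         (simp add: ennreal_mult[symmetric] ennreal_plus[symmetric] del: ennreal_plus)
    finally show ?thesis .
  qed
  show int: "integrable M (\<lambda>\<omega>. Xv U \<alpha> i \<omega> * Xv U \<alpha> j \<omega>)"
    using le by (intro integrableI_bounded) (auto simp: Xv_nonneg abs_mult top_unique intro: le_less_trans)
  have "(\<integral>\<omega>. Xv U \<alpha> i \<omega> * Xv U \<alpha> j \<omega> \<partial>M) = enn2real (\<integral>\<^sup>+\<omega>. ennreal (Xv U \<alpha> i \<omega> * Xv U \<alpha> j \<omega>) \<partial>M)"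
    by (rule integral_eq_nn_integral) (auto simp: Xv_nonneg)
  also have "\<dots> \<le> B" using le B0 by (intro enn2real_leI) auto
  finally show "(\<integral>\<omega>. Xv U \<alpha> i \<omega> * Xv U \<alpha> j \<omega> \<partial>M) \<le> B" .
qed

lemma int_XX:
  assumes "i \<ge> 1" "j \<ge> 1"
  shows "integrable M (\<lambda>\<omega>. Xv U \<alpha> i \<omega> * Xv U \<alpha> j \<omega>)"
proof (cases i j rule: linorder_cases)
  case less then show ?thesis using int_XX_lt(1) assms by simp
next
  case equal then show ?thesis using int_X2(1)[of i] assms by (simp add: power2_eq_square)
next
  case greater then show ?thesis using int_XX_lt(1)[of j i] assms by (simp add: mult.commute)
qed

lemma m_mono:
  assumes i: "i \<ge> 1"
  shows "enn2real (Mi TYPE('a) \<alpha> (Suc i)) \<le> enn2real (Mi TYPE('a) \<alpha> i)"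
proof -
  have "Mi TYPE('a) \<alpha> (Suc i) \<le> Mi TYPE('a) \<alpha> i"
    unfolding Mi_def
  proof (rule nn_integral_mono, rule mult_left_mono)
    fix t :: real
    show "(\<integral>\<^sup>+y. ennreal ((1 - capv (y::'a) t) ^ Suc i) \<partial>UC) \<le> (\<integral>\<^sup>+y. ennreal ((1 - capv (y::'a) t) ^ i) \<partial>UC)"
      by (intro nn_integral_mono ennreal_leI) (auto intro!: mult_left_le_one_le simp: capv_nonneg capv_le1)
  qed simp
  moreover have "Mi TYPE('a) \<alpha> i < \<top>"
    by (subst Mi_fin(1)[OF i a]) simp
  ultimately show ?thesis by (intro enn2real_mono)
qed

end

lemma (in prob_space) L1_le_L2:
  fixes f :: "'a \<Rightarrow> real"
  assumes f2: "integrable M (\<lambda>x. f x ^ 2)" and f: "integrable M f"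
  shows "(\<integral>x. \<bar>f x\<bar> \<partial>M) \<le> sqrt (\<integral>x. f x ^ 2 \<partial>M)"
proof -
  define m where "m = (\<integral>x. \<bar>f x\<bar> \<partial>M)"
  have fa: "integrable M (\<lambda>x. \<bar>f x\<bar>)" using f by (rule integrable_abs)
  have "(\<lambda>x. (\<bar>f x\<bar> - m) ^ 2) = (\<lambda>x. f x ^ 2 - 2 * m * \<bar>f x\<bar> + m ^ 2)"
    by (intro ext) (simp add: power2_eq_square algebra_simps abs_mult_self_eq)
  moreover have "(\<integral>x. f x ^ 2 - 2 * m * \<bar>f x\<bar> + m ^ 2 \<partial>M) = (\<integral>x. f x ^ 2 \<partial>M) - 2 * m * m + m ^ 2"
    using f2 fa unfolding m_def by (simp add: prob_space)
  moreover have "0 \<le> (\<integral>x. (\<bar>f x\<bar> - m) ^ 2 \<partial>M)" by (rule integral_nonneg_AE) auto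
  ultimately have "m ^ 2 \<le> (\<integral>x. f x ^ 2 \<partial>M)" by (simp add: power2_eq_square)
  then show ?thesis unfolding m_def by (rule real_le_rsqrt)
qed

definition mseq :: "'a::euclidean_space itself \<Rightarrow> real \<Rightarrow> nat \<Rightarrow> real" where
  "mseq T a i = enn2real (Mi T a i)"

definition Ssum :: "(nat \<Rightarrow> 'b \<Rightarrow> 'a::metric_space) \<Rightarrow> real \<Rightarrow> nat \<Rightarrow> 'b \<Rightarrow> real" where
  "Ssum U a n \<omega> = (\<Sum>i\<in>{1..<n}. Xv U a i \<omega>)"

context
  fixes M :: "'b measure" and U :: "nat \<Rightarrow> 'b \<Rightarrow> 'a::euclidean_space" and \<alpha> :: real
  assumes M: "prob_space M" and ind: "prob_space.indep_vars M (\<lambda>_. borel) U UNIV"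
    and distr: "\<And>i. distr M borel (U i) = UC"
    and a: "\<alpha> > 0"
begin

interpretation P: prob_space M by (rule M)


lemma S_int: "integrable M (Ssum U \<alpha> n)"
  unfolding Ssum_def
proof (rule Bochner_Integration.integrable_sum)
  fix i assume "i \<in> {1..<n}"
  then show "integrable M (Xv U \<alpha> i)" using int_X(1)[OF M ind distr a, of i \<alpha>] a by auto
qed

lemma S_E: "(\<integral>\<omega>. Ssum U \<alpha> n \<omega> \<partial>M) = (\<Sum>i\<in>{1..<n}. mseq TYPE('a) \<alpha> i)"
  unfolding Ssum_def mseq_def by (subst Bochner_Integration.integral_sum) (auto intro!: int_X[OF M ind distr a] a sum.cong)

lemma SX_int: "n \<ge> 1 \<Longrightarrow> integrable M (\<lambda>\<omega>. Ssum U \<alpha> N \<omega> * Xv U \<alpha> n \<omega>)"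
  unfolding Ssum_def sum_distrib_right by (intro Bochner_Integration.integrable_sum int_XX[OF M ind distr a]) auto

lemma S2_int: "integrable M (\<lambda>\<omega>. Ssum U \<alpha> n \<omega> ^ 2)"
  unfolding power2_eq_square by (subst (2) Ssum_def, unfold sum_distrib_left) (auto intro!: Bochner_Integration.integrable_sum SX_int)

lemma m_nonneg: "0 \<le> mseq TYPE('a) \<alpha> i" by (simp add: mseq_def)

lemma m_le_m1: "n \<ge> 1 \<Longrightarrow> mseq TYPE('a) \<alpha> n \<le> mseq TYPE('a) \<alpha> 1"
proof (induction n rule: dec_induct)
  case (step n) then show ?case using m_mono[OF M ind distr a, of n] by (simp add: mseq_def)
qed simp

end

context
  fixes M :: "'b measure" and U :: "nat \<Rightarrow> 'b \<Rightarrow> 'a::euclidean_space" and \<alpha> :: real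
  assumes M: "prob_space M" and ind: "prob_space.indep_vars M (\<lambda>_. borel) U UNIV"
    and distr: "\<And>i. distr M borel (U i) = UC"
    and a: "\<alpha> > 0" and aD: "\<alpha> < DIM('a)"
begin

interpretation P: prob_space M by (rule M)

lemma b01: "0 < \<alpha> / DIM('a)" "\<alpha> / DIM('a) < 1"
  using a aD by (auto simp: field_simps)

lemma summable_b: "summable (\<lambda>n. real n powr (- 1 - \<alpha> / DIM('a)))"
  using b01 by (subst summable_real_powr_iff) auto

lemma sum_b_le: "(\<Sum>i\<in>{1..<n}. real i powr (- 1 - \<alpha> / DIM('a))) \<le> suminf (\<lambda>n. real n powr (- 1 - \<alpha> / DIM('a)))"
  by (rule sum_le_suminf[OF summable_b]) auto

lemma m_le: "n \<ge> 1 \<Longrightarrow> mseq TYPE('a) \<alpha> n \<le> Gc \<alpha> DIM('a) 0 (1 / DIM('a) ^ DIM('a)) * real n powr (- (\<alpha> / DIM('a)))"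
  using Mi_fin(2)[OF M ind distr a _ a, of n] Gc_scale[of "real n" "1 / DIM('a) ^ DIM('a)" \<alpha> "DIM('a)" 0]
  by (simp add: mseq_def)

lemma X2_le: "n \<ge> 1 \<Longrightarrow> (\<integral>\<omega>. Xv U \<alpha> n \<omega> ^ 2 \<partial>M) \<le> Gc (2 * \<alpha>) DIM('a) 0 (1 / DIM('a) ^ DIM('a)) * real n powr (- (\<alpha> / DIM('a)))"
proof -
  assume n: "n \<ge> 1"
  define G2 where "G2 = Gc (2 * \<alpha>) DIM('a) 0 (1 / DIM('a) ^ DIM('a))"
  have G2: "G2 \<ge> 0" unfolding G2_def using a by (intro Gc_nonneg) auto
  have "(\<integral>\<omega>. Xv U \<alpha> n \<omega> ^ 2 \<partial>M) \<le> Gc (2 * \<alpha>) DIM('a) 0 (n / DIM('a) ^ DIM('a))"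
    by (rule int_X2(2)[OF M ind distr a n])
  also have "\<dots> = G2 * real n powr (- ((2 * \<alpha>) / DIM('a)))"
    using Gc_scale[of "real n" "1 / DIM('a) ^ DIM('a)" "2 * \<alpha>" "DIM('a)" 0] n by (simp add: G2_def)
  also have "\<dots> \<le> G2 * real n powr (- (\<alpha> / DIM('a)))"
    using n a G2 by (intro mult_left_mono powr_mono) (auto simp: field_simps)
  finally show ?thesis unfolding G2_def .
qed

definition "Zc = suminf (\<lambda>n. real n powr (- 1 - \<alpha> / DIM('a)))"
definition "Tc = 2 * Kc \<alpha> DIM('a) * Zc * 2 powr (\<alpha> / DIM('a)) + Gc (2 * \<alpha>) DIM('a) 0 (1 / DIM('a) ^ DIM('a))"

lemma Zc_nonneg: "0 \<le> Zc"
  unfolding Zc_def by (rule suminf_nonneg[OF summable_b]) auto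

lemma Q_step:
  assumes N: "N \<ge> 1"
  shows "(\<integral>\<omega>. Ssum U \<alpha> (Suc N) \<omega> ^ 2 \<partial>M) \<le> (\<integral>\<omega>. Ssum U \<alpha> N \<omega> ^ 2 \<partial>M)
      + 2 * ((\<Sum>i\<in>{1..<N}. mseq TYPE('a) \<alpha> i) * mseq TYPE('a) \<alpha> (N - 1)) + Tc * real N powr (- (\<alpha> / DIM('a)))"
proof -
  define b where "b = \<alpha> / DIM('a)"
  have SS: "Ssum U \<alpha> (Suc N) \<omega> = Ssum U \<alpha> N \<omega> + Xv U \<alpha> N \<omega>" for \<omega>
    using N by (simp add: Ssum_def)
  have eq: "(\<integral>\<omega>. Ssum U \<alpha> (Suc N) \<omega> ^ 2 \<partial>M) = (\<integral>\<omega>. Ssum U \<alpha> N \<omega> ^ 2 \<partial>M) +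
      2 * (\<integral>\<omega>. Ssum U \<alpha> N \<omega> * Xv U \<alpha> N \<omega> \<partial>M) + (\<integral>\<omega>. Xv U \<alpha> N \<omega> ^ 2 \<partial>M)"
  proof -
    have "(\<lambda>\<omega>. Ssum U \<alpha> (Suc N) \<omega> ^ 2) = (\<lambda>\<omega>. Ssum U \<alpha> N \<omega> ^ 2 + 2 * (Ssum U \<alpha> N \<omega> * Xv U \<alpha> N \<omega>) + Xv U \<alpha> N \<omega> ^ 2)"
      by (intro ext) (simp add: SS power2_eq_square algebra_simps)
    then show ?thesis
      using S2_int[OF M ind distr a] SX_int[OF M ind distr a N] int_X2(1)[OF M ind distr a N]
      by simp
  qed
  have cross: "(\<integral>\<omega>. Ssum U \<alpha> N \<omega> * Xv U \<alpha> N \<omega> \<partial>M) \<le>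
     (\<Sum>i\<in>{1..<N}. mseq TYPE('a) \<alpha> i) * mseq TYPE('a) \<alpha> (N - 1) + Kc \<alpha> DIM('a) * Zc * real (N - 1) powr (- b)"
  proof -
    have "(\<integral>\<omega>. Ssum U \<alpha> N \<omega> * Xv U \<alpha> N \<omega> \<partial>M) = (\<Sum>i\<in>{1..<N}. \<integral>\<omega>. Xv U \<alpha> i \<omega> * Xv U \<alpha> N \<omega> \<partial>M)"
      unfolding Ssum_def sum_distrib_right
      by (rule Bochner_Integration.integral_sum) (auto intro!: int_XX[OF M ind distr a])
    also have "\<dots> \<le> (\<Sum>i\<in>{1..<N}. mseq TYPE('a) \<alpha> i * mseq TYPE('a) \<alpha> (N - 1) +
         Kc \<alpha> DIM('a) * (real i powr (- 1 - b) * real (N - 1) powr (- b)))"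
      by (intro sum_mono) (use int_XX_lt(2)[OF M ind distr a] in \<open>auto simp: mseq_def b_def\<close>)
    also have "\<dots> = (\<Sum>i\<in>{1..<N}. mseq TYPE('a) \<alpha> i) * mseq TYPE('a) \<alpha> (N - 1) +
         Kc \<alpha> DIM('a) * real (N - 1) powr (- b) * (\<Sum>i\<in>{1..<N}. real i powr (- 1 - b))"
      by (simp add: sum.distrib sum_distrib_left sum_distrib_right mult_ac)
    also have "\<dots> \<le> (\<Sum>i\<in>{1..<N}. mseq TYPE('a) \<alpha> i) * mseq TYPE('a) \<alpha> (N - 1) +
         Kc \<alpha> DIM('a) * real (N - 1) powr (- b) * Zc"
      using sum_b_le Kc_nonneg[OF a, of "DIM('a)"] unfolding Zc_def b_def
      by (intro add_left_mono mult_left_mono) auto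
    finally show ?thesis by (simp add: mult_ac)
  qed
  have pw: "real (N - 1) powr (- b) \<le> 2 powr b * real N powr (- b)"
  proof (cases "N = 1")
    case True then show ?thesis by simp
  next
    case False
    then have N2: "N \<ge> 2" using N by simp
    have "real (N - 1) \<ge> real N / 2" using N2 by (simp add: of_nat_diff field_simps)
    then have "real (N - 1) powr (- b) \<le> (real N / 2) powr (- b)"
      using N2 b01 unfolding b_def by (intro powr_mono2') auto
    also have "\<dots> = 2 powr b * real N powr (- b)"
      by (simp add: powr_divide powr_minus_divide field_simps)
    finally show ?thesis .
  qed
  have "2 * (Kc \<alpha> DIM('a) * Zc * real (N - 1) powr (- b)) \<le> 2 * (Kc \<alpha> DIM('a) * Zc * (2 powr b * real N powr (- b)))"
    using pw Kc_nonneg[OF a, of "DIM('a)"] Zc_nonneg by (intro mult_left_mono mult_nonneg_nonneg) auto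
  moreover have "(\<integral>\<omega>. Xv U \<alpha> N \<omega> ^ 2 \<partial>M) \<le> Gc (2 * \<alpha>) DIM('a) 0 (1 / DIM('a) ^ DIM('a)) * real N powr (- b)"
    using X2_le[OF N] by (simp add: b_def)
  ultimately show ?thesis using cross unfolding eq Tc_def b_def by (simp add: algebra_simps)
qed

lemma S1_zero: "Ssum U \<alpha> 1 \<omega> = 0" by (simp add: Ssum_def)

lemma Q_bound:
  assumes N: "N \<ge> 1"
  shows "(\<integral>\<omega>. Ssum U \<alpha> N \<omega> ^ 2 \<partial>M) \<le> (\<Sum>i\<in>{1..<N}. mseq TYPE('a) \<alpha> i) ^ 2
     + 2 * (\<Sum>i\<in>{1..<N}. mseq TYPE('a) \<alpha> i) * (mseq TYPE('a) \<alpha> 1 - mseq TYPE('a) \<alpha> (N - 1))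
     + Tc * (\<Sum>n\<in>{1..<N}. real n powr (- (\<alpha> / DIM('a))))"
  using N
proof (induction N rule: dec_induct)
  case base then show ?case by (simp add: Ssum_def)
next
  case (step N)
  define A where "A = (\<Sum>i\<in>{1..<N}. mseq TYPE('a) \<alpha> i)"
  define mN where "mN = mseq TYPE('a) \<alpha> N"
  define m1 where "m1 = mseq TYPE('a) \<alpha> 1"
  define s where "s = (\<Sum>n\<in>{1..<N}. real n powr (- (\<alpha> / DIM('a))))"
  have A1: "(\<Sum>i\<in>{1..<Suc N}. mseq TYPE('a) \<alpha> i) = A + mN" using step(1) by (simp add: A_def mN_def)
  have s1: "(\<Sum>n\<in>{1..<Suc N}. real n powr (- (\<alpha> / DIM('a)))) = s + real N powr (- (\<alpha> / DIM('a)))"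
    using step(1) by (simp add: s_def)
  have mN: "0 \<le> mN" "mN \<le> m1" using m_le_m1[OF M ind distr a step(1)] by (auto simp: mN_def m1_def m_nonneg[OF M ind distr a])
  have "(\<integral>\<omega>. Ssum U \<alpha> (Suc N) \<omega> ^ 2 \<partial>M) \<le> (\<integral>\<omega>. Ssum U \<alpha> N \<omega> ^ 2 \<partial>M)
      + 2 * (A * mseq TYPE('a) \<alpha> (N - 1)) + Tc * real N powr (- (\<alpha> / DIM('a)))"
    using Q_step[OF step(1)] by (simp add: A_def)
  also have "\<dots> \<le> A ^ 2 + 2 * A * (m1 - mseq TYPE('a) \<alpha> (N - 1)) + Tc * s
      + 2 * (A * mseq TYPE('a) \<alpha> (N - 1)) + Tc * real N powr (- (\<alpha> / DIM('a)))"
    using step(3) by (simp add: A_def m1_def s_def)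
  also have "\<dots> = A ^ 2 + 2 * A * m1 + Tc * (s + real N powr (- (\<alpha> / DIM('a))))"
    by (simp add: algebra_simps)
  also have "\<dots> \<le> (A + mN) ^ 2 + 2 * (A + mN) * (m1 - mN) + Tc * (s + real N powr (- (\<alpha> / DIM('a))))"
  proof -
    have "0 \<le> mN * (2 * m1 - mN)" using mN by (intro mult_nonneg_nonneg) auto
    then show ?thesis by (simp add: power2_eq_square algebra_simps)
  qed
  finally show ?case unfolding A1 s1 by (simp add: mN_def m1_def)
qed

lemma EY2_lim:
  defines "b \<equiv> \<alpha> / DIM('a)"
  defines "c \<equiv> Gamma (1 + b) * unit_ball_vol DIM('a) powr (- b) / (1 - b)"
  shows "(\<lambda>N. \<integral>\<omega>. (real N powr (b - 1) * Ssum U \<alpha> N \<omega> - c) ^ 2 \<partial>M) \<longlonglongrightarrow> 0"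
proof -
  have b: "0 < b" "b < 1" using b01 by (auto simp: b_def)
  define A where "A = (\<lambda>N. \<Sum>i\<in>{1..<N}. mseq TYPE('a) \<alpha> i)"
  define s where "s = (\<lambda>N. \<Sum>n\<in>{1..<N}. real n powr (- b))"
  define G0 where "G0 = Gc \<alpha> DIM('a) 0 (1 / DIM('a) ^ DIM('a))"
  define m1 where "m1 = mseq TYPE('a) \<alpha> 1"
  define C where "C = (2 * G0 * m1 + Tc) / (1 - b)"
  have G0: "0 \<le> G0" unfolding G0_def using a by (intro Gc_nonneg) auto
  have m1: "0 \<le> m1" by (simp add: m1_def m_nonneg[OF M ind distr a])
  have Tc: "0 \<le> Tc" unfolding Tc_def using Kc_nonneg[OF a, of "DIM('a)"] Zc_nonneg a
    by (intro add_nonneg_nonneg mult_nonneg_nonneg Gc_nonneg) auto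
  have A0: "0 \<le> A N" for N unfolding A_def by (intro sum_nonneg) (simp add: m_nonneg[OF M ind distr a])
  have AL: "(\<lambda>N. real N powr (b - 1) * A N) \<longlonglongrightarrow> c"
  proof -
    have "(\<lambda>k. real k powr b * mseq TYPE('a) \<alpha> k) \<longlonglongrightarrow> Gamma (1 + b) * unit_ball_vol DIM('a) powr (- b)"
      using Mi_lim[OF a, where 'a='a] unfolding mseq_def b_def by simp
    from cesaro_pow[OF b this] show ?thesis unfolding A_def c_def .
  qed
  have As: "A N \<le> G0 * s N" for N
  proof -
    have "A N \<le> (\<Sum>i\<in>{1..<N}. G0 * real i powr (- b))"
      unfolding A_def by (intro sum_mono) (use m_le in \<open>auto simp: G0_def b_def\<close>)
    then show ?thesis by (simp add: s_def sum_distrib_left)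
  qed
  have sN: "s N \<le> real N powr (1 - b) / (1 - b)" for N unfolding s_def by (rule powsum_upper'[OF b])
  have bound: "(\<integral>\<omega>. (real N powr (b - 1) * Ssum U \<alpha> N \<omega> - c) ^ 2 \<partial>M) \<le>
      (real N powr (b - 1) * A N - c) ^ 2 + C * real N powr (b - 1)" if N: "N \<ge> 1" for N
  proof -
    define x where "x = real N powr (b - 1)"
    have x: "x > 0" using N by (simp add: x_def)
    have "(\<integral>\<omega>. (x * Ssum U \<alpha> N \<omega> - c) ^ 2 \<partial>M) =
        x ^ 2 * (\<integral>\<omega>. Ssum U \<alpha> N \<omega> ^ 2 \<partial>M) - 2 * c * x * (\<integral>\<omega>. Ssum U \<alpha> N \<omega> \<partial>M) + c ^ 2"
    proof -
      have "(\<lambda>\<omega>. (x * Ssum U \<alpha> N \<omega> - c) ^ 2) = (\<lambda>\<omega>. x ^ 2 * Ssum U \<alpha> N \<omega> ^ 2 - 2 * c * x * Ssum U \<alpha> N \<omega> + c ^ 2)"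
        by (intro ext) (simp add: power2_eq_square algebra_simps)
      then show ?thesis using S2_int[OF M ind distr a, of N] S_int[OF M ind distr a, of N]
        by (simp add: P.prob_space)
    qed
    also have "(\<integral>\<omega>. Ssum U \<alpha> N \<omega> \<partial>M) = A N" unfolding A_def by (rule S_E[OF M ind distr a])
    also have "x ^ 2 * (\<integral>\<omega>. Ssum U \<alpha> N \<omega> ^ 2 \<partial>M) \<le> x ^ 2 * (A N ^ 2 + (2 * G0 * m1 + Tc) * s N)"
    proof (intro mult_left_mono)
      have "(\<integral>\<omega>. Ssum U \<alpha> N \<omega> ^ 2 \<partial>M) \<le> A N ^ 2 + 2 * A N * (m1 - mseq TYPE('a) \<alpha> (N - 1)) + Tc * s N"
        using Q_bound[OF N] by (simp add: A_def m1_def s_def b_def)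
      also have "\<dots> \<le> A N ^ 2 + 2 * A N * m1 + Tc * s N"
        using A0[of N] m_nonneg[OF M ind distr a, of "N - 1"] by (simp add: mult_left_mono)
      also have "2 * A N * m1 \<le> 2 * (G0 * s N) * m1"
        using As[of N] m1 by (intro mult_right_mono) auto
      finally show "(\<integral>\<omega>. Ssum U \<alpha> N \<omega> ^ 2 \<partial>M) \<le> A N ^ 2 + (2 * G0 * m1 + Tc) * s N"
        by (simp add: algebra_simps)
    qed simp
    also have "(2 * G0 * m1 + Tc) * s N \<le> (2 * G0 * m1 + Tc) * (real N powr (1 - b) / (1 - b))"
      using G0 m1 Tc sN[of N] by (intro mult_left_mono) auto
    then have "x ^ 2 * (A N ^ 2 + (2 * G0 * m1 + Tc) * s N) \<le> x ^ 2 * (A N ^ 2 + (2 * G0 * m1 + Tc) * (real N powr (1 - b) / (1 - b)))"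
      by (intro mult_left_mono) auto
    also have "x ^ 2 * (A N ^ 2 + (2 * G0 * m1 + Tc) * (real N powr (1 - b) / (1 - b))) =
        (x * A N) ^ 2 + C * real N powr (b - 1)"
    proof -
      have "x ^ 2 * real N powr (1 - b) = real N powr (b - 1)"
        using N unfolding x_def by (simp add: power2_eq_square powr_add[symmetric])
      then show ?thesis unfolding C_def by (simp add: power_mult_distrib algebra_simps add_divide_distrib)
    qed
    finally show ?thesis unfolding x_def by (simp add: power2_eq_square algebra_simps)
  qed
  show ?thesis
  proof (rule tendsto_sandwich[where f="\<lambda>_. 0" and h="\<lambda>N. (real N powr (b - 1) * A N - c) ^ 2 + C * real N powr (b - 1)"])
    show "\<forall>\<^sub>F N in sequentially. 0 \<le> (\<integral>\<omega>. (real N powr (b - 1) * Ssum U \<alpha> N \<omega> - c) ^ 2 \<partial>M)"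
      by (intro always_eventually allI integral_nonneg_AE) auto
    show "\<forall>\<^sub>F N in sequentially. (\<integral>\<omega>. (real N powr (b - 1) * Ssum U \<alpha> N \<omega> - c) ^ 2 \<partial>M) \<le>
        (real N powr (b - 1) * A N - c) ^ 2 + C * real N powr (b - 1)"
      using bound by (intro eventually_sequentiallyI[of 1]) auto
    have "(\<lambda>N. (real N powr (b - 1) * A N - c) ^ 2 + C * real N powr (b - 1)) \<longlonglongrightarrow> (c - c) ^ 2 + C * 0"
      using b by (intro tendsto_intros AL tendsto_neg_powr filterlim_real_sequentially) auto
    then show "(\<lambda>N. (real N powr (b - 1) * A N - c) ^ 2 + C * real N powr (b - 1)) \<longlonglongrightarrow> 0" by simp
  qed simp
qed

lemma EabsY_lim:
  defines "b \<equiv> \<alpha> / DIM('a)"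
  defines "c \<equiv> Gamma (1 + b) * unit_ball_vol DIM('a) powr (- b) / (1 - b)"
  shows "(\<lambda>N. \<integral>\<omega>. \<bar>real N powr (b - 1) * Ssum U \<alpha> N \<omega> - c\<bar> \<partial>M) \<longlonglongrightarrow> 0"
proof (rule tendsto_sandwich[where f="\<lambda>_. 0" and h="\<lambda>N. sqrt (\<integral>\<omega>. (real N powr (b - 1) * Ssum U \<alpha> N \<omega> - c) ^ 2 \<partial>M)"])
  show "\<forall>\<^sub>F N in sequentially. 0 \<le> (\<integral>\<omega>. \<bar>real N powr (b - 1) * Ssum U \<alpha> N \<omega> - c\<bar> \<partial>M)"
    by (intro always_eventually allI integral_nonneg_AE) auto
  show "\<forall>\<^sub>F N in sequentially. (\<integral>\<omega>. \<bar>real N powr (b - 1) * Ssum U \<alpha> N \<omega> - c\<bar> \<partial>M) \<le>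
      sqrt (\<integral>\<omega>. (real N powr (b - 1) * Ssum U \<alpha> N \<omega> - c) ^ 2 \<partial>M)"
  proof (intro always_eventually allI P.L1_le_L2)
    fix N
    have "(\<lambda>\<omega>. (real N powr (b - 1) * Ssum U \<alpha> N \<omega> - c) ^ 2) =
        (\<lambda>\<omega>. (real N powr (b - 1)) ^ 2 * Ssum U \<alpha> N \<omega> ^ 2 - 2 * c * real N powr (b - 1) * Ssum U \<alpha> N \<omega> + c ^ 2)"
      by (intro ext) (simp add: power2_eq_square algebra_simps)
    then show "integrable M (\<lambda>\<omega>. (real N powr (b - 1) * Ssum U \<alpha> N \<omega> - c) ^ 2)"
      using S2_int[OF M ind distr a, of N] S_int[OF M ind distr a, of N] by simp
    show "integrable M (\<lambda>\<omega>. real N powr (b - 1) * Ssum U \<alpha> N \<omega> - c)"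
      using S_int[OF M ind distr a, of N] by simp
  qed
  have "(\<lambda>N. sqrt (\<integral>\<omega>. (real N powr (b - 1) * Ssum U \<alpha> N \<omega> - c) ^ 2 \<partial>M)) \<longlonglongrightarrow> sqrt 0"
    by (intro tendsto_real_sqrt) (use EY2_lim in \<open>simp add: b_def c_def\<close>)
  then show "(\<lambda>N. sqrt (\<integral>\<omega>. (real N powr (b - 1) * Ssum U \<alpha> N \<omega> - c) ^ 2 \<partial>M)) \<longlonglongrightarrow> 0" by simp
qed simp

end

lemma ong_weight_pos: "a \<noteq> 0 \<Longrightarrow> ong_weight a (\<lambda>i. U i \<omega>) n = Ssum U a n \<omega>"
  unfolding ong_weight_def Ssum_def Xv_def pow_weight_def by (intro sum.cong) auto

lemma ong_weight_zero: "ong_weight 0 x n = real n - 1 + (if n = 0 then 1 else 0)"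
proof -
  have "ong_weight 0 x n = (\<Sum>i\<in>{1..<n}. 1)"
    unfolding ong_weight_def pow_weight_def by (intro sum.cong) auto
  then show ?thesis by (cases n) auto
qed

theorem theorem4:
  fixes M :: "'b measure" and U :: "nat \<Rightarrow> 'b \<Rightarrow> 'a::euclidean_space" and \<alpha> :: real
  assumes "prob_space M"
    and "prob_space.indep_vars M (\<lambda>_. borel) U UNIV"
    and "\<And>i. distr M borel (U i) = uniform_measure lborel (box 0 One)"
    and "0 \<le> \<alpha>" and "\<alpha> < real DIM('a)"
  shows "(\<forall>n. integrable M (\<lambda>\<omega>. real n powr ((\<alpha> - DIM('a)) / DIM('a)) * ong_weight \<alpha> (\<lambda>i. U i \<omega>) n))
    \<and> (\<lambda>n. LINT \<omega>|M. \<bar>real n powr ((\<alpha> - DIM('a)) / DIM('a)) * ong_weight \<alpha> (\<lambda>i. U i \<omega>) n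
            - DIM('a) / (DIM('a) - \<alpha>) * unit_ball_volume DIM('a) powr (- \<alpha> / DIM('a))
              * Gamma (1 + \<alpha> / DIM('a))\<bar>) \<longlonglongrightarrow> 0"
proof -
  note M = assms(1) and ind = assms(2)
  interpret P: prob_space M by (rule M)
  have distr: "\<And>i. distr M borel (U i) = UC" using assms(3) by (simp add: UC_def)
  define D where "D = real DIM('a)"
  have D: "D > 0" by (simp add: D_def)
  show ?thesis
  proof (cases "\<alpha> = 0")
    case True
    have v: "unit_ball_volume DIM('a) > 0" by (simp add: unit_ball_volume_eq)
    have c1: "DIM('a) / (DIM('a) - \<alpha>) * unit_ball_volume DIM('a) powr (- \<alpha> / DIM('a)) * Gamma (1 + \<alpha> / DIM('a)) = 1"
      using True v by simp
    define f where "f = (\<lambda>n::nat. real n powr ((0 - real DIM('a)) / DIM('a)) * (real n - 1 + (if n = 0 then 1 else 0)))"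
    have int: "integrable M (\<lambda>\<omega>. real n powr ((\<alpha> - DIM('a)) / DIM('a)) * ong_weight \<alpha> (\<lambda>i. U i \<omega>) n)" for n
      using True by (simp add: ong_weight_zero)
    have "(\<lambda>n. LINT \<omega>|M. \<bar>real n powr ((\<alpha> - DIM('a)) / DIM('a)) * ong_weight \<alpha> (\<lambda>i. U i \<omega>) n
            - DIM('a) / (DIM('a) - \<alpha>) * unit_ball_volume DIM('a) powr (- \<alpha> / DIM('a))
              * Gamma (1 + \<alpha> / DIM('a))\<bar>) = (\<lambda>n. \<bar>f n - 1\<bar>)"
      unfolding c1 using True by (simp add: ong_weight_zero f_def P.prob_space)
    moreover have "(\<lambda>n. \<bar>f n - 1\<bar>) \<longlonglongrightarrow> 0"
    proof -
      have ev: "\<forall>\<^sub>F n in sequentially. f n = 1 - 1 / real n"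
      proof (rule eventually_sequentiallyI[of 1])
        fix n :: nat assume n: "n \<ge> 1"
        have "real n powr ((0 - real DIM('a)) / DIM('a)) = 1 / real n"
          using n by (simp add: powr_minus_divide)
        then show "f n = 1 - 1 / real n" using n by (simp add: f_def field_simps)
      qed
      have "(\<lambda>n. \<bar>(1 - 1 / real n) - 1\<bar>) \<longlonglongrightarrow> \<bar>(1 - 0) - 1\<bar>"
        by (intro tendsto_intros lim_inverse_n')
      then have "(\<lambda>n. \<bar>(1 - 1 / real n) - 1\<bar>) \<longlonglongrightarrow> 0" by simp
      then show ?thesis
        by (rule Lim_transform_eventually) (use ev in \<open>auto elim: eventually_mono\<close>)
    qed
    ultimately show ?thesis using int by simp
  next
    case False
    then have a: "\<alpha> > 0" using assms(4) by simp
    have aD: "\<alpha> < DIM('a)" using assms(5) by simp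
    have e1: "(\<alpha> - DIM('a)) / DIM('a) = \<alpha> / DIM('a) - 1" by (simp add: field_simps)
    have e2: "DIM('a) / (DIM('a) - \<alpha>) * unit_ball_volume DIM('a) powr (- \<alpha> / DIM('a)) * Gamma (1 + \<alpha> / DIM('a))
        = Gamma (1 + \<alpha> / DIM('a)) * unit_ball_vol DIM('a) powr (- (\<alpha> / DIM('a))) / (1 - \<alpha> / DIM('a))"
      using aD by (simp add: unit_ball_volume_eq field_simps)
    have int: "integrable M (\<lambda>\<omega>. real n powr ((\<alpha> - DIM('a)) / DIM('a)) * ong_weight \<alpha> (\<lambda>i. U i \<omega>) n)" for n
      unfolding ong_weight_pos[OF False] using S_int[OF M ind distr a, of n] by simp
    show ?thesis
      unfolding e1 e2 ong_weight_pos[OF False]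
      using int EabsY_lim[OF M ind distr a aD] unfolding e1 ong_weight_pos[OF False] by simp
  qed
qed

end
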